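(* There is an isomorphism of graded superrings $Z_s(A_n)\cong R^{S_n}$, where $Z_s(A_n)=\{x\in A_n: xa=(-1)^{p(x)p(a)}ax \text{ for all homogeneous } a\in A_n\}$ is the supercenter and $R^{S_n}$ is the subsuperring of $S_n$-invariants of $R$.
   Context: $R=\mathbb{Z}[x_1,\dots,x_n]\otimes\bigwedge^\bullet(\omega_1,\dots,\omega_n)$ is supercommutative, $x_i$ even of degree $(2,0)$, $\omega_i$ odd of degree $(-2i,2)$; $p$ denotes parity. $S_n$ acts on $R$ by ring automorphisms with $s_i(x_j)=x_{s_i(j)}$ and $s_i(\omega_j)=\omega_j+\delta_{ij}(x_i-x_{i+1})\omega_{i+1}$. Demazure operators: $\partial_i(f)=(f-s_i(f))/(x_i-x_{i+1})$, $1\le i\le n-1$. $A_n$ is the bigraded $\mathbb{Z}$-superalgebra of operators on $R$ generated by the $\partial_i$ together with multiplication by elements of $R$. *)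

theory Defs
  imports Main
begin

text \<open>Concrete model of R = Z[x_1..x_n] (x) Lambda(omega_1..omega_n).
  A monomial x^a omega_S is a pair (a, S); omega_S is the ordered product
  omega_{j1} ... omega_{jk} with j1 < ... < jk.\<close>

type_synonym mon = "(nat \<Rightarrow> nat) \<times> nat set"
type_synonym elt = "mon \<Rightarrow> int"

definition valid_mon :: "nat \<Rightarrow> mon \<Rightarrow> bool" where
  "valid_mon n m \<longleftrightarrow> (\<forall>j. j \<notin> {1..n} \<longrightarrow> fst m j = 0) \<and> snd m \<subseteq> {1..n}"

definition supp :: "elt \<Rightarrow> mon set" where
  "supp c = {m. c m \<noteq> 0}"

definition Rn :: "nat \<Rightarrow> elt set" where
  "Rn n = {c. finite (supp c) \<and> (\<forall>m\<in>supp c. valid_mon n m)}"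

definition mono :: "mon \<Rightarrow> elt" where
  "mono m = (\<lambda>k. if k = m then 1 else 0)"

definition rzero :: elt where "rzero = (\<lambda>_. 0)"
definition rone :: elt where "rone = mono (\<lambda>_. 0, {})"
definition radd :: "elt \<Rightarrow> elt \<Rightarrow> elt" where "radd c d = (\<lambda>m. c m + d m)"
definition rneg :: "elt \<Rightarrow> elt" where "rneg c = (\<lambda>m. - c m)"

text \<open>Sign of omega_S * omega_T = wsign S T * omega_{S \<union> T} (for disjoint S, T).\<close>
definition wsign :: "nat set \<Rightarrow> nat set \<Rightarrow> int" where
  "wsign S T = (-1) ^ card {(i, j). i \<in> S \<and> j \<in> T \<and> j < i}"

definition rmul :: "elt \<Rightarrow> elt \<Rightarrow> elt" where
  "rmul c d = (\<lambda>m. \<Sum>k1\<in>supp c. \<Sum>k2\<in>supp d.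
      if (\<lambda>j. fst k1 j + fst k2 j) = fst m \<and> snd k1 \<inter> snd k2 = {} \<and> snd k1 \<union> snd k2 = snd m
      then wsign (snd k1) (snd k2) * c k1 * d k2 else 0)"

definition lin :: "(mon \<Rightarrow> elt) \<Rightarrow> elt \<Rightarrow> elt" where
  "lin F c = (\<lambda>m. \<Sum>k\<in>supp c. c k * F k m)"

definition xvar :: "nat \<Rightarrow> elt" where
  "xvar j = mono (\<lambda>l. if l = j then 1 else 0, {})"

definition swapexp :: "nat \<Rightarrow> (nat \<Rightarrow> nat) \<Rightarrow> (nat \<Rightarrow> nat)" where
  "swapexp i a = (\<lambda>l. a (if l = i then i + 1 else if l = i + 1 then i else l))"

text \<open>Image of the monomial x^a omega_S under s_i (the ring automorphism with
  s_i(x_j) = x_{s_i(j)}, s_i(omega_j) = omega_j + delta_{ij}(x_i - x_{i+1}) omega_{i+1}).\<close>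
definition simg :: "nat \<Rightarrow> mon \<Rightarrow> elt" where
  "simg i m = (let a' = swapexp i (fst m); S = snd m in
     radd (mono (a', S))
       (if i \<in> S \<and> i + 1 \<notin> S
        then rmul (radd (xvar i) (rneg (xvar (i + 1)))) (mono (a', insert (i + 1) (S - {i})))
        else rzero))"

definition sact :: "nat \<Rightarrow> elt \<Rightarrow> elt" where
  "sact i c = lin (simg i) c"

definition dem :: "nat \<Rightarrow> nat \<Rightarrow> elt \<Rightarrow> elt" where
  "dem n i c = (THE g. g \<in> Rn n \<and>
      rmul (radd (xvar i) (rneg (xvar (i + 1)))) g = radd c (rneg (sact i c)))"

text \<open>S_n-invariants (S_n is generated by s_1, ..., s_{n-1}).\<close>
definition Rinv :: "nat \<Rightarrow> elt set" where
  "Rinv n = {f \<in> Rn n. \<forall>i. 1 \<le> i \<and> i < n \<longrightarrow> sact i f = f}"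

text \<open>Operators on R, represented as functions that vanish outside R.\<close>
definition restr :: "nat \<Rightarrow> (elt \<Rightarrow> elt) \<Rightarrow> elt \<Rightarrow> elt" where
  "restr n T = (\<lambda>g. if g \<in> Rn n then T g else rzero)"

definition mulop :: "nat \<Rightarrow> elt \<Rightarrow> elt \<Rightarrow> elt" where
  "mulop n f = restr n (rmul f)"

definition demop :: "nat \<Rightarrow> nat \<Rightarrow> elt \<Rightarrow> elt" where
  "demop n i = restr n (dem n i)"

definition idop :: "nat \<Rightarrow> elt \<Rightarrow> elt" where
  "idop n = restr n id"

definition zeroop :: "elt \<Rightarrow> elt" where
  "zeroop = (\<lambda>_. rzero)"

definition opadd :: "(elt \<Rightarrow> elt) \<Rightarrow> (elt \<Rightarrow> elt) \<Rightarrow> elt \<Rightarrow> elt" where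
  "opadd T U = (\<lambda>g. radd (T g) (U g))"

definition opscale :: "int \<Rightarrow> (elt \<Rightarrow> elt) \<Rightarrow> elt \<Rightarrow> elt" where
  "opscale k T = (\<lambda>g m. k * T g m)"

inductive_set An :: "nat \<Rightarrow> (elt \<Rightarrow> elt) set" for n where
  mul: "f \<in> Rn n \<Longrightarrow> mulop n f \<in> An n"
| dem: "1 \<le> i \<Longrightarrow> i < n \<Longrightarrow> demop n i \<in> An n"
| add: "T \<in> An n \<Longrightarrow> U \<in> An n \<Longrightarrow> opadd T U \<in> An n"
| comp: "T \<in> An n \<Longrightarrow> U \<in> An n \<Longrightarrow> T \<circ> U \<in> An n"

text \<open>Bigrading: deg x_j = (2,0), deg omega_j = (-2j, 2).\<close>
definition mdeg :: "mon \<Rightarrow> int \<times> int" where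
  "mdeg m = (2 * int (\<Sum>j\<in>{j. fst m j \<noteq> 0}. fst m j) - (\<Sum>j\<in>snd m. 2 * int j),
             2 * int (card (snd m)))"

definition homR :: "nat \<Rightarrow> int \<times> int \<Rightarrow> elt \<Rightarrow> bool" where
  "homR n d c \<longleftrightarrow> c \<in> Rn n \<and> (\<forall>m\<in>supp c. mdeg m = d)"

definition hom_op :: "nat \<Rightarrow> int \<times> int \<Rightarrow> (elt \<Rightarrow> elt) \<Rightarrow> bool" where
  "hom_op n d T \<longleftrightarrow>
     (\<forall>e c. homR n e c \<longrightarrow> homR n (fst d + fst e, snd d + snd e) (T c))"

text \<open>Parity of bidegree (a,b): omega's are odd and have second degree 2.\<close>
definition par :: "int \<times> int \<Rightarrow> nat" where
  "par d = nat ((snd d div 2) mod 2)"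

definition HZ :: "nat \<Rightarrow> (elt \<Rightarrow> elt) set" where
  "HZ n = {x \<in> An n. \<exists>d. hom_op n d x \<and>
      (\<forall>a\<in>An n. \<forall>e. hom_op n e a \<longrightarrow>
          x \<circ> a = opscale ((-1) ^ (par d * par e)) (a \<circ> x))}"

inductive_set Zs :: "nat \<Rightarrow> (elt \<Rightarrow> elt) set" for n where
  zero: "zeroop \<in> Zs n"
| add: "x \<in> HZ n \<Longrightarrow> y \<in> Zs n \<Longrightarrow> opadd x y \<in> Zs n"

end

theory Submission
  imports Defs "HOL-Library.Function_Algebras"
begin

lemma radd_eq: "radd c d = c + d" by (simp add: radd_def fun_eq_iff)
lemma rneg_eq: "rneg c = - c" by (simp add: rneg_def fun_eq_iff)
lemma rzero_eq: "rzero = 0" by (simp add: rzero_def fun_eq_iff)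

definition sc :: "int \<Rightarrow> elt \<Rightarrow> elt" where "sc k c = (\<lambda>m. k * c m)"

lemma sum_fun_apply: "(\<Sum>a\<in>A. F a) m = (\<Sum>a\<in>A. F a m)"
  for F :: "'b \<Rightarrow> 'c \<Rightarrow> 'd::comm_monoid_add"
  by (induction A rule: infinite_finite_induct) auto

lemma uminus_apply: "(- c) m = - (c m)" for c :: elt by simp
lemma minus_apply: "(c - d) m = c m - d m" for c :: elt by simp

lemma supp_iff: "m \<in> supp c \<longleftrightarrow> c m \<noteq> 0" by (simp add: supp_def)

lemma Rn_zero: "0 \<in> Rn n" by (simp add: Rn_def supp_def)
lemma Rn_add: "c \<in> Rn n \<Longrightarrow> d \<in> Rn n \<Longrightarrow> c + d \<in> Rn n"
proof -
  assume a: "c \<in> Rn n" "d \<in> Rn n"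
  have "supp (c + d) \<subseteq> supp c \<union> supp d" by (auto simp: supp_def)
  with a show ?thesis unfolding Rn_def by (auto intro: finite_subset)
qed
lemma Rn_uminus: "c \<in> Rn n \<Longrightarrow> - c \<in> Rn n"
  by (simp add: Rn_def supp_def)
lemma Rn_diff: "c \<in> Rn n \<Longrightarrow> d \<in> Rn n \<Longrightarrow> c - d \<in> Rn n"
  using Rn_add[of c n "-d"] Rn_uminus[of d n] by simp
lemma supp_sc: "supp (sc k c) \<subseteq> supp c" by (auto simp: supp_def sc_def)
lemma Rn_sc: "c \<in> Rn n \<Longrightarrow> sc k c \<in> Rn n"
  using supp_sc[of k c] unfolding Rn_def by (auto intro: finite_subset)
lemma supp_mono: "supp (mono k) = {k}" by (auto simp: supp_def mono_def)
lemma Rn_mono: "valid_mon n k \<Longrightarrow> mono k \<in> Rn n"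
  by (simp add: Rn_def supp_mono)
lemma Rn_sum: "(\<And>a. a \<in> A \<Longrightarrow> G a \<in> Rn n) \<Longrightarrow> sum G A \<in> Rn n"
  by (induction A rule: infinite_finite_induct) (auto simp: Rn_zero Rn_add)
lemma Rn_fin: "c \<in> Rn n \<Longrightarrow> finite (supp c)" by (simp add: Rn_def)
lemma Rn_valid: "c \<in> Rn n \<Longrightarrow> m \<in> supp c \<Longrightarrow> valid_mon n m" by (simp add: Rn_def)

lemma sc_add: "sc k (c + d) = sc k c + sc k d" by (simp add: sc_def fun_eq_iff algebra_simps)
lemma sc_sc: "sc k (sc l c) = sc (k * l) c" by (simp add: sc_def fun_eq_iff)
lemma sc_1: "sc 1 c = c" by (simp add: sc_def)
lemma sc_0: "sc k 0 = 0" by (simp add: sc_def fun_eq_iff)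
lemma sum_infinite0: "infinite A \<Longrightarrow> sum F A = 0" by simp
lemma sc_zero: "sc 0 c = 0" by (simp add: sc_def fun_eq_iff)
lemma sc_sum: "sc k (sum F A) = (\<Sum>a\<in>A. sc k (F a))"
  by (simp add: sc_def fun_eq_iff sum_fun_apply sum_distrib_left)
lemma sc_uminus: "sc k (- c) = - sc k c" by (simp add: sc_def fun_eq_iff)
lemma sc_minus: "sc k (c - d) = sc k c - sc k d" by (simp add: sc_def fun_eq_iff algebra_simps)
lemma sc_neg1: "sc (-1) c = - c" by (simp add: sc_def fun_eq_iff)
lemma sc_addk: "sc (k + l) c = sc k c + sc l c" by (simp add: sc_def fun_eq_iff algebra_simps)

lemma expand: "c \<in> Rn n \<Longrightarrow> c = (\<Sum>k\<in>supp c. sc (c k) (mono k))"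
proof (rule ext)
  fix m assume c: "c \<in> Rn n"
  have "(\<Sum>k\<in>supp c. sc (c k) (mono k)) m = (\<Sum>k\<in>supp c. if m = k then c k else 0)"
    by (simp add: sum_fun_apply sc_def mono_def if_distrib cong: if_cong)
  also have "\<dots> = c m" using c by (simp add: supp_def Rn_def)
  finally show "c m = (\<Sum>k\<in>supp c. sc (c k) (mono k)) m" by simp
qed

definition linop :: "nat \<Rightarrow> (elt \<Rightarrow> elt) \<Rightarrow> bool" where
  "linop n L \<longleftrightarrow> (\<forall>c\<in>Rn n. \<forall>d\<in>Rn n. L (c + d) = L c + L d) \<and> (\<forall>k. \<forall>c\<in>Rn n. L (sc k c) = sc k (L c))"

lemma linop_zero: "linop n L \<Longrightarrow> L 0 = 0"
proof -
  assume "linop n L"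
  then have "L (0 + 0) = L 0 + L 0" using Rn_zero unfolding linop_def by blast
  then show ?thesis by simp
qed

lemma linop_add: "linop n L \<Longrightarrow> c \<in> Rn n \<Longrightarrow> d \<in> Rn n \<Longrightarrow> L (c + d) = L c + L d"
  by (simp add: linop_def)
lemma linop_sc: "linop n L \<Longrightarrow> c \<in> Rn n \<Longrightarrow> L (sc k c) = sc k (L c)"
  by (simp add: linop_def)
lemma linop_uminus: "linop n L \<Longrightarrow> c \<in> Rn n \<Longrightarrow> L (- c) = - L c"
  using linop_sc[of n L c "-1"] by (simp add: sc_neg1)
lemma linop_diff: "linop n L \<Longrightarrow> c \<in> Rn n \<Longrightarrow> d \<in> Rn n \<Longrightarrow> L (c - d) = L c - L d"
  using linop_add[of n L c "-d"] linop_uminus[of n L d] Rn_uminus[of d n] by simp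

lemma linop_sum: "linop n L \<Longrightarrow> (\<And>a. a \<in> A \<Longrightarrow> G a \<in> Rn n) \<Longrightarrow> L (sum G A) = (\<Sum>a\<in>A. L (G a))"
proof (induction A rule: infinite_finite_induct)
  case (infinite A)
  then have "sum G A = 0" "(\<Sum>a\<in>A. L (G a)) = 0" by auto
  then show ?case using linop_zero[OF infinite(2)] by metis
next
  case empty then show ?case using linop_zero[of n L] by (subst sum.empty)+ simp
next
  case (insert x B)
  have "L (sum G (insert x B)) = L (G x + sum G B)" using insert(1,2) by (subst sum.insert) auto
  also have "\<dots> = L (G x) + L (sum G B)" using insert by (intro linop_add Rn_sum) auto
  also have "\<dots> = L (G x) + (\<Sum>a\<in>B. L (G a))" using insert by simp
  also have "\<dots> = (\<Sum>a\<in>insert x B. L (G a))" using insert(1,2) by (subst sum.insert) auto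
  finally show ?case .
qed

lemma linop_expand: "linop n L \<Longrightarrow> c \<in> Rn n \<Longrightarrow> L c = (\<Sum>k\<in>supp c. sc (c k) (L (mono k)))"
proof -
  assume L: "linop n L" and c: "c \<in> Rn n"
  have "L c = L (\<Sum>k\<in>supp c. sc (c k) (mono k))" using expand[OF c] by simp
  also have "\<dots> = (\<Sum>k\<in>supp c. L (sc (c k) (mono k)))"
    by (rule linop_sum[OF L]) (meson Rn_sc Rn_mono Rn_valid c)
  also have "\<dots> = (\<Sum>k\<in>supp c. sc (c k) (L (mono k)))"
    by (rule sum.cong) (auto intro: linop_sc[OF L] Rn_mono Rn_valid c)
  finally show ?thesis .
qed

lemma linop_eq: "linop n L \<Longrightarrow> linop n L' \<Longrightarrow> (\<And>k. valid_mon n k \<Longrightarrow> L (mono k) = L' (mono k))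
  \<Longrightarrow> c \<in> Rn n \<Longrightarrow> L c = L' c"
  by (simp add: linop_expand Rn_valid cong: sum.cong)

definition inv :: "nat set \<Rightarrow> nat set \<Rightarrow> nat" where
  "inv S T = card {(i, j). i \<in> S \<and> j \<in> T \<and> j < i}"

lemma wsign_inv: "wsign S T = (-1) ^ inv S T" by (simp add: wsign_def inv_def)

lemma inv_fin: "finite S \<Longrightarrow> finite T \<Longrightarrow> finite {(i, j). i \<in> S \<and> j \<in> T \<and> j < i}"
  by (rule finite_subset[of _ "S \<times> T"]) auto

lemma inv_union_left: "finite S \<Longrightarrow> finite T \<Longrightarrow> finite U \<Longrightarrow> S \<inter> T = {} \<Longrightarrow>
  inv (S \<union> T) U = inv S U + inv T U"
proof -
  assume f: "finite S" "finite T" "finite U" and d: "S \<inter> T = {}"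
  have "{(i, j). i \<in> S \<union> T \<and> j \<in> U \<and> j < i} = {(i, j). i \<in> S \<and> j \<in> U \<and> j < i} \<union> {(i, j). i \<in> T \<and> j \<in> U \<and> j < i}"
    by auto
  moreover have "{(i, j). i \<in> S \<and> j \<in> U \<and> j < i} \<inter> {(i, j). i \<in> T \<and> j \<in> U \<and> j < i} = {}" using d by auto
  ultimately show ?thesis unfolding inv_def using f by (simp add: card_Un_disjoint inv_fin)
qed

lemma inv_union_right: "finite S \<Longrightarrow> finite T \<Longrightarrow> finite U \<Longrightarrow> T \<inter> U = {} \<Longrightarrow>
  inv S (T \<union> U) = inv S T + inv S U"
proof -
  assume f: "finite S" "finite T" "finite U" and d: "T \<inter> U = {}"
  have "{(i, j). i \<in> S \<and> j \<in> T \<union> U \<and> j < i} = {(i, j). i \<in> S \<and> j \<in> T \<and> j < i} \<union> {(i, j). i \<in> S \<and> j \<in> U \<and> j < i}"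
    by auto
  moreover have "{(i, j). i \<in> S \<and> j \<in> T \<and> j < i} \<inter> {(i, j). i \<in> S \<and> j \<in> U \<and> j < i} = {}" using d by auto
  ultimately show ?thesis unfolding inv_def using f by (simp add: card_Un_disjoint inv_fin)
qed

definition madd :: "mon \<Rightarrow> mon \<Rightarrow> mon" where
  "madd k1 k2 = ((\<lambda>j. fst k1 j + fst k2 j), snd k1 \<union> snd k2)"

definition mp :: "mon \<Rightarrow> mon \<Rightarrow> elt" where
  "mp k1 k2 = (if snd k1 \<inter> snd k2 = {} then sc (wsign (snd k1) (snd k2)) (mono (madd k1 k2)) else 0)"

lemma mp_apply: "mp k1 k2 m = (if (\<lambda>j. fst k1 j + fst k2 j) = fst m \<and> snd k1 \<inter> snd k2 = {} \<and> snd k1 \<union> snd k2 = snd m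
      then wsign (snd k1) (snd k2) else 0)"
  by (cases m) (auto simp: mp_def sc_def mono_def madd_def)

lemma rmul_alt: "finite A \<Longrightarrow> supp c \<subseteq> A \<Longrightarrow> finite B \<Longrightarrow> supp d \<subseteq> B \<Longrightarrow>
  rmul c d m = (\<Sum>k1\<in>A. \<Sum>k2\<in>B. c k1 * d k2 * mp k1 k2 m)"
proof -
  assume A: "finite A" "supp c \<subseteq> A" and B: "finite B" "supp d \<subseteq> B"
  have "rmul c d m = (\<Sum>k1\<in>supp c. \<Sum>k2\<in>supp d. c k1 * d k2 * mp k1 k2 m)"
    unfolding rmul_def mp_apply by (intro sum.cong) auto
  also have "\<dots> = (\<Sum>k1\<in>supp c. \<Sum>k2\<in>B. c k1 * d k2 * mp k1 k2 m)"
    by (intro sum.cong refl sum.mono_neutral_left B) (auto simp: supp_def)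
  also have "\<dots> = (\<Sum>k1\<in>A. \<Sum>k2\<in>B. c k1 * d k2 * mp k1 k2 m)"
    by (intro sum.mono_neutral_left A) (auto simp: supp_def)
  finally show ?thesis .
qed

lemma rmul_add_left: "c \<in> Rn n \<Longrightarrow> c' \<in> Rn n \<Longrightarrow> d \<in> Rn n \<Longrightarrow> rmul (c + c') d = rmul c d + rmul c' d"
proof (rule ext)
  fix m assume h: "c \<in> Rn n" "c' \<in> Rn n" "d \<in> Rn n"
  let ?A = "supp c \<union> supp c'"
  have f: "finite ?A" "finite (supp d)" using h by (auto simp: Rn_fin)
  have s: "supp (c + c') \<subseteq> ?A" "supp c \<subseteq> ?A" "supp c' \<subseteq> ?A" by (auto simp: supp_def)
  show "rmul (c + c') d m = (rmul c d + rmul c' d) m"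
    using rmul_alt[OF f(1) s(1) f(2) subset_refl] rmul_alt[OF f(1) s(2) f(2) subset_refl]
      rmul_alt[OF f(1) s(3) f(2) subset_refl]
    by (simp add: sum.distrib[symmetric] algebra_simps)
qed

lemma rmul_add_right: "c \<in> Rn n \<Longrightarrow> d \<in> Rn n \<Longrightarrow> d' \<in> Rn n \<Longrightarrow> rmul c (d + d') = rmul c d + rmul c d'"
proof (rule ext)
  fix m assume h: "c \<in> Rn n" "d \<in> Rn n" "d' \<in> Rn n"
  let ?B = "supp d \<union> supp d'"
  have f: "finite ?B" "finite (supp c)" using h by (auto simp: Rn_fin)
  have s: "supp (d + d') \<subseteq> ?B" "supp d \<subseteq> ?B" "supp d' \<subseteq> ?B" by (auto simp: supp_def)
  show "rmul c (d + d') m = (rmul c d + rmul c d') m"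
    using rmul_alt[OF f(2) subset_refl f(1) s(1)] rmul_alt[OF f(2) subset_refl f(1) s(2)]
      rmul_alt[OF f(2) subset_refl f(1) s(3)]
    by (simp add: sum.distrib[symmetric] algebra_simps)
qed

lemma rmul_sc_left: "c \<in> Rn n \<Longrightarrow> d \<in> Rn n \<Longrightarrow> rmul (sc k c) d = sc k (rmul c d)"
proof (rule ext)
  fix m assume h: "c \<in> Rn n" "d \<in> Rn n"
  have f: "finite (supp c)" "finite (supp d)" using h by (auto simp: Rn_fin)
  show "rmul (sc k c) d m = sc k (rmul c d) m"
    using rmul_alt[OF f(1) supp_sc f(2) subset_refl, of k] rmul_alt[OF f(1) subset_refl f(2) subset_refl]
    by (simp add: sc_def sum_distrib_left algebra_simps)
qed

lemma rmul_sc_right: "c \<in> Rn n \<Longrightarrow> d \<in> Rn n \<Longrightarrow> rmul c (sc k d) = sc k (rmul c d)"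
proof (rule ext)
  fix m assume h: "c \<in> Rn n" "d \<in> Rn n"
  have f: "finite (supp c)" "finite (supp d)" using h by (auto simp: Rn_fin)
  show "rmul c (sc k d) m = sc k (rmul c d) m"
    using rmul_alt[OF f(1) subset_refl f(2) supp_sc, of k] rmul_alt[OF f(1) subset_refl f(2) subset_refl]
    by (simp add: sc_def sum_distrib_left algebra_simps)
qed

lemma rmul_zero_left: "rmul 0 d = 0" by (simp add: rmul_def supp_def fun_eq_iff)
lemma rmul_zero_right: "rmul c 0 = 0" by (simp add: rmul_def supp_def fun_eq_iff)

lemma rmul_mono: "rmul (mono k1) (mono k2) = mp k1 k2"
proof (rule ext)
  fix m
  show "rmul (mono k1) (mono k2) m = mp k1 k2 m"
    using rmul_alt[of "{k1}" "mono k1" "{k2}" "mono k2" m] by (simp add: supp_mono) (simp add: mono_def)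
qed

lemma sum_nonzero_ex: "sum g A \<noteq> (0::'a::comm_monoid_add) \<Longrightarrow> \<exists>a\<in>A. g a \<noteq> 0"
  by (meson sum.neutral)

lemma supp_rmul: "m \<in> supp (rmul c d) \<Longrightarrow>
  \<exists>k1\<in>supp c. \<exists>k2\<in>supp d. snd k1 \<inter> snd k2 = {} \<and> m = madd k1 k2"
proof -
  assume "m \<in> supp (rmul c d)"
  then have "rmul c d m \<noteq> 0" by (simp add: supp_def)
  then obtain k1 where k1: "k1 \<in> supp c" "(\<Sum>k2\<in>supp d.
      if (\<lambda>j. fst k1 j + fst k2 j) = fst m \<and> snd k1 \<inter> snd k2 = {} \<and> snd k1 \<union> snd k2 = snd m
      then wsign (snd k1) (snd k2) * c k1 * d k2 else 0) \<noteq> 0"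
    unfolding rmul_def by (auto dest: sum_nonzero_ex)
  then obtain k2 where k2: "k2 \<in> supp d" "(\<lambda>j. fst k1 j + fst k2 j) = fst m \<and> snd k1 \<inter> snd k2 = {} \<and> snd k1 \<union> snd k2 = snd m"
    by (auto dest!: sum_nonzero_ex split: if_splits)
  then show ?thesis using k1 by (intro bexI[of _ k1] bexI[of _ k2]) (auto simp: madd_def prod_eq_iff)
qed

lemma valid_madd: "valid_mon n k1 \<Longrightarrow> valid_mon n k2 \<Longrightarrow> valid_mon n (madd k1 k2)"
  by (simp add: valid_mon_def madd_def)

lemma Rn_rmul: "c \<in> Rn n \<Longrightarrow> d \<in> Rn n \<Longrightarrow> rmul c d \<in> Rn n"
proof -
  assume h: "c \<in> Rn n" "d \<in> Rn n"
  have "supp (rmul c d) \<subseteq> (\<lambda>(k1, k2). madd k1 k2) ` (supp c \<times> supp d)"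
    by (auto dest!: supp_rmul)
  moreover have "finite ((\<lambda>(k1, k2). madd k1 k2) ` (supp c \<times> supp d))" using h by (simp add: Rn_fin)
  ultimately have "finite (supp (rmul c d))" by (rule finite_subset)
  moreover have "\<forall>m\<in>supp (rmul c d). valid_mon n m"
    using h by (auto dest!: supp_rmul intro!: valid_madd simp: Rn_valid)
  ultimately show ?thesis by (simp add: Rn_def)
qed

lemma linop_rmul_left: "d \<in> Rn n \<Longrightarrow> linop n (\<lambda>c. rmul c d)"
  by (simp add: linop_def rmul_add_left rmul_sc_left)
lemma linop_rmul_right: "c \<in> Rn n \<Longrightarrow> linop n (\<lambda>d. rmul c d)"
  by (simp add: linop_def rmul_add_right rmul_sc_right)

lemma valid_fin: "valid_mon n k \<Longrightarrow> finite (snd k)"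
  by (auto simp: valid_mon_def intro: finite_subset)

lemma Rn_mp: "valid_mon n k1 \<Longrightarrow> valid_mon n k2 \<Longrightarrow> mp k1 k2 \<in> Rn n"
  by (simp add: mp_def Rn_zero Rn_sc Rn_mono valid_madd)

lemma rmul_mp_mono: "valid_mon n k1 \<Longrightarrow> valid_mon n k2 \<Longrightarrow> valid_mon n k3 \<Longrightarrow>
  rmul (mp k1 k2) (mono k3) = (if snd k1 \<inter> snd k2 = {} then sc (wsign (snd k1) (snd k2)) (mp (madd k1 k2) k3) else 0)"
  using rmul_sc_left[of "mono (madd k1 k2)" n "mono k3"]
  by (auto simp: mp_def rmul_zero_left rmul_mono Rn_mono valid_madd)

lemma rmul_mono_mp: "valid_mon n k1 \<Longrightarrow> valid_mon n k2 \<Longrightarrow> valid_mon n k3 \<Longrightarrow>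
  rmul (mono k1) (mp k2 k3) = (if snd k2 \<inter> snd k3 = {} then sc (wsign (snd k2) (snd k3)) (mp k1 (madd k2 k3)) else 0)"
  using rmul_sc_right[of "mono k1" n "mono (madd k2 k3)"]
  by (auto simp: mp_def rmul_zero_right rmul_mono Rn_mono valid_madd)

lemma madd_assoc: "madd (madd k1 k2) k3 = madd k1 (madd k2 k3)"
  by (simp add: madd_def add.assoc Un_assoc)

lemma wsign_assoc: "finite S1 \<Longrightarrow> finite S2 \<Longrightarrow> finite S3 \<Longrightarrow> S1 \<inter> S2 = {} \<Longrightarrow> S1 \<inter> S3 = {} \<Longrightarrow> S2 \<inter> S3 = {} \<Longrightarrow>
  wsign S1 S2 * wsign (S1 \<union> S2) S3 = wsign S2 S3 * wsign S1 (S2 \<union> S3)"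
  by (simp add: wsign_inv inv_union_left inv_union_right power_add[symmetric] algebra_simps)

lemma snd_madd: "snd (madd k1 k2) = snd k1 \<union> snd k2" by (simp add: madd_def)

lemma mp_assoc: "valid_mon n k1 \<Longrightarrow> valid_mon n k2 \<Longrightarrow> valid_mon n k3 \<Longrightarrow>
  rmul (mp k1 k2) (mono k3) = rmul (mono k1) (mp k2 k3)"
proof -
  assume v: "valid_mon n k1" "valid_mon n k2" "valid_mon n k3"
  have f: "finite (snd k1)" "finite (snd k2)" "finite (snd k3)" using v by (auto simp: valid_fin)
  let ?P = "snd k1 \<inter> snd k2 = {} \<and> snd k1 \<inter> snd k3 = {} \<and> snd k2 \<inter> snd k3 = {}"
  have "rmul (mp k1 k2) (mono k3) = (if snd k1 \<inter> snd k2 = {} then sc (wsign (snd k1) (snd k2)) (mp (madd k1 k2) k3) else 0)"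
    by (rule rmul_mp_mono[OF v])
  also have "\<dots> = (if ?P then sc (wsign (snd k1) (snd k2) * wsign (snd k1 \<union> snd k2) (snd k3)) (mono (madd (madd k1 k2) k3)) else 0)"
    by (auto simp: mp_def snd_madd sc_sc sc_0)
  also have "\<dots> = (if ?P then sc (wsign (snd k2) (snd k3) * wsign (snd k1) (snd k2 \<union> snd k3)) (mono (madd k1 (madd k2 k3))) else 0)"
    using wsign_assoc[OF f] by (simp add: madd_assoc)
  also have "\<dots> = (if snd k2 \<inter> snd k3 = {} then sc (wsign (snd k2) (snd k3)) (mp k1 (madd k2 k3)) else 0)"
    by (auto simp: mp_def snd_madd sc_sc sc_0)
  also have "\<dots> = rmul (mono k1) (mp k2 k3)"
    by (rule rmul_mono_mp[OF v, symmetric])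
  finally show ?thesis .
qed

lemma linop_comp: "linop n L1 \<Longrightarrow> linop n L2 \<Longrightarrow> (\<And>c. c \<in> Rn n \<Longrightarrow> L2 c \<in> Rn n) \<Longrightarrow> linop n (\<lambda>c. L1 (L2 c))"
  by (simp add: linop_def Rn_add Rn_sc)

lemma linop_id: "linop n (\<lambda>c. c)" by (simp add: linop_def)

lemma rmul_assoc: "c \<in> Rn n \<Longrightarrow> d \<in> Rn n \<Longrightarrow> e \<in> Rn n \<Longrightarrow> rmul (rmul c d) e = rmul c (rmul d e)"
proof -
  assume c: "c \<in> Rn n" and d: "d \<in> Rn n" and e: "e \<in> Rn n"
  have s1: "rmul (rmul (mono k1) (mono k2)) e = rmul (mono k1) (rmul (mono k2) e)"
    if k1: "valid_mon n k1" and k2: "valid_mon n k2" and e: "e \<in> Rn n" for k1 k2 e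
  proof (rule linop_eq[where n=n, of "\<lambda>e. rmul (rmul (mono k1) (mono k2)) e" "\<lambda>e. rmul (mono k1) (rmul (mono k2) e)"])
    show "linop n (\<lambda>e. rmul (rmul (mono k1) (mono k2)) e)"
      by (rule linop_rmul_right[OF Rn_rmul[OF Rn_mono[OF k1] Rn_mono[OF k2]]])
    show "linop n (\<lambda>e. rmul (mono k1) (rmul (mono k2) e))"
      by (rule linop_comp[OF linop_rmul_right[OF Rn_mono[OF k1]] linop_rmul_right[OF Rn_mono[OF k2]] Rn_rmul[OF Rn_mono[OF k2]]])
    show "rmul (rmul (mono k1) (mono k2)) (mono k3) = rmul (mono k1) (rmul (mono k2) (mono k3))" if "valid_mon n k3" for k3
      using mp_assoc[OF k1 k2 that] by (simp add: rmul_mono)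
  qed (rule e)
  have s2: "rmul (rmul (mono k1) d) e = rmul (mono k1) (rmul d e)"
    if k1: "valid_mon n k1" and d: "d \<in> Rn n" and e: "e \<in> Rn n" for k1 d e
  proof (rule linop_eq[where n=n, of "\<lambda>d. rmul (rmul (mono k1) d) e" "\<lambda>d. rmul (mono k1) (rmul d e)"])
    show "linop n (\<lambda>d. rmul (rmul (mono k1) d) e)"
      by (rule linop_comp[OF linop_rmul_left[OF e] linop_rmul_right[OF Rn_mono[OF k1]] Rn_rmul[OF Rn_mono[OF k1]]])
    show "linop n (\<lambda>d. rmul (mono k1) (rmul d e))"
      by (rule linop_comp[OF linop_rmul_right[OF Rn_mono[OF k1]] linop_rmul_left[OF e] Rn_rmul[OF _ e]])
    show "rmul (rmul (mono k1) (mono k2)) e = rmul (mono k1) (rmul (mono k2) e)" if "valid_mon n k2" for k2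
      by (rule s1[OF k1 that e])
  qed (rule d)
  show ?thesis
  proof (rule linop_eq[where n=n, of "\<lambda>c. rmul (rmul c d) e" "\<lambda>c. rmul c (rmul d e)"])
    show "linop n (\<lambda>c. rmul (rmul c d) e)"
      by (rule linop_comp[OF linop_rmul_left[OF e] linop_rmul_left[OF d] Rn_rmul[OF _ d]])
    show "linop n (\<lambda>c. rmul c (rmul d e))"
      by (rule linop_rmul_left[OF Rn_rmul[OF d e]])
    show "rmul (rmul (mono k1) d) e = rmul (mono k1) (rmul d e)" if "valid_mon n k1" for k1
      by (rule s2[OF that d e])
  qed (rule c)
qed

lemma valid_one: "valid_mon n (\<lambda>_. 0, {})" by (simp add: valid_mon_def)
lemma Rn_rone: "rone \<in> Rn n" by (simp add: rone_def Rn_mono valid_one)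

lemma rmul_one_left: "c \<in> Rn n \<Longrightarrow> rmul rone c = c"
  by (rule linop_eq[where n=n, of "\<lambda>c. rmul rone c" "\<lambda>c. c"])
    (auto intro!: linop_rmul_right linop_id Rn_rone Rn_mono valid_one simp: rone_def rmul_mono mp_def wsign_def madd_def sc_1)

lemma rmul_one_right: "c \<in> Rn n \<Longrightarrow> rmul c rone = c"
  by (rule linop_eq[where n=n, of "\<lambda>c. rmul c rone" "\<lambda>c. c"])
    (auto intro!: linop_rmul_left linop_id Rn_rone Rn_mono valid_one simp: rone_def rmul_mono mp_def wsign_def madd_def sc_1)

section \<open>parity twist\<close>

definition sigp :: "nat \<Rightarrow> elt \<Rightarrow> elt" where
  "sigp p c = (\<lambda>m. (-1) ^ (p * card (snd m)) * c m)"

lemma supp_sigp: "supp (sigp p c) = supp c" by (auto simp: supp_def sigp_def)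
lemma Rn_sigp: "c \<in> Rn n \<Longrightarrow> sigp p c \<in> Rn n" by (simp add: Rn_def supp_sigp)
lemma sigp_sigp: "sigp p (sigp p c) = c"
  by (simp add: sigp_def fun_eq_iff mult.assoc[symmetric])
lemma linop_sigp: "linop n (sigp p)"
  by (simp add: linop_def sigp_def fun_eq_iff sc_def algebra_simps)
lemma sigp_mono: "sigp p (mono k) = sc ((-1) ^ (p * card (snd k))) (mono k)"
proof (rule ext)
  fix m show "sigp p (mono k) m = sc ((-1) ^ (p * card (snd k))) (mono k) m"
    by (cases "m = k") (simp_all add: sigp_def sc_def mono_def)
qed
lemma sigp_sc: "sigp p (sc k c) = sc k (sigp p c)" by (simp add: sigp_def sc_def fun_eq_iff)
lemma sigp_add: "sigp p (c + d) = sigp p c + sigp p d" by (simp add: sigp_def fun_eq_iff algebra_simps)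
lemma sigp_0: "sigp p 0 = 0" by (simp add: sigp_def fun_eq_iff)

lemma sigp_mp: "valid_mon n k1 \<Longrightarrow> valid_mon n k2 \<Longrightarrow>
  sigp p (mp k1 k2) = sc ((-1) ^ (p * card (snd k1))) (sc ((-1) ^ (p * card (snd k2))) (mp k1 k2))"
  by (auto simp: mp_def sigp_sc sigp_mono sc_sc sigp_0 sc_0 madd_def card_Un_disjoint valid_fin
      algebra_simps power_add)

lemma sigp_rmul: "c \<in> Rn n \<Longrightarrow> d \<in> Rn n \<Longrightarrow> sigp p (rmul c d) = rmul (sigp p c) (sigp p d)"
proof -
  assume c: "c \<in> Rn n" and d: "d \<in> Rn n"
  have s1: "sigp p (rmul (mono k1) d) = rmul (sigp p (mono k1)) (sigp p d)"
    if k1: "valid_mon n k1" and d: "d \<in> Rn n" for k1 d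
  proof (rule linop_eq[where n=n, of "\<lambda>d. sigp p (rmul (mono k1) d)" "\<lambda>d. rmul (sigp p (mono k1)) (sigp p d)"])
    show "linop n (\<lambda>d. sigp p (rmul (mono k1) d))"
      by (rule linop_comp[OF linop_sigp linop_rmul_right[OF Rn_mono[OF k1]] Rn_rmul[OF Rn_mono[OF k1]]])
    show "linop n (\<lambda>d. rmul (sigp p (mono k1)) (sigp p d))"
      by (rule linop_comp[OF linop_rmul_right[OF Rn_sigp[OF Rn_mono[OF k1]]] linop_sigp Rn_sigp])
    show "sigp p (rmul (mono k1) (mono k2)) = rmul (sigp p (mono k1)) (sigp p (mono k2))" if k2: "valid_mon n k2" for k2
      using k1 k2 by (simp add: sigp_mono rmul_sc_left[OF Rn_mono[OF k1] Rn_sc[OF Rn_mono[OF k2]]]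
        rmul_sc_right[OF Rn_mono[OF k1] Rn_mono[OF k2]] rmul_mono sigp_mp[OF k1 k2] sc_sc mult.commute)
  qed (rule d)
  show ?thesis
  proof (rule linop_eq[where n=n, of "\<lambda>c. sigp p (rmul c d)" "\<lambda>c. rmul (sigp p c) (sigp p d)"])
    show "linop n (\<lambda>c. sigp p (rmul c d))"
      by (rule linop_comp[OF linop_sigp linop_rmul_left[OF d] Rn_rmul[OF _ d]])
    show "linop n (\<lambda>c. rmul (sigp p c) (sigp p d))"
      by (rule linop_comp[OF linop_rmul_left[OF Rn_sigp[OF d]] linop_sigp Rn_sigp])
    show "sigp p (rmul (mono k1) d) = rmul (sigp p (mono k1)) (sigp p d)" if "valid_mon n k1" for k1
      by (rule s1[OF that d])
  qed (rule c)
qed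

section \<open>supercommutativity\<close>

lemma inv_swap: "finite S \<Longrightarrow> finite T \<Longrightarrow> S \<inter> T = {} \<Longrightarrow> inv S T + inv T S = card S * card T"
proof -
  assume f: "finite S" "finite T" and d: "S \<inter> T = {}"
  let ?X = "{(i, j). i \<in> S \<and> j \<in> T \<and> j < i}"
  let ?Y = "{(i, j). i \<in> S \<and> j \<in> T \<and> i < j}"
  have "S \<times> T = ?X \<union> ?Y" using d by (auto simp: linorder_neq_iff)
  moreover have "?X \<inter> ?Y = {}" by auto
  moreover have "finite ?X" "finite ?Y" using f by (auto intro: finite_subset[of _ "S \<times> T"])
  ultimately have "card S * card T = card ?X + card ?Y" by (simp add: card_Un_disjoint card_cartesian_product[symmetric])
  moreover have "card ?Y = inv T S"
  proof -
    have "?Y = (\<lambda>(i, j). (j, i)) ` {(i, j). i \<in> T \<and> j \<in> S \<and> j < i}" by auto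
    moreover have "inj_on (\<lambda>(i, j). (j, i)) {(i, j). i \<in> T \<and> j \<in> S \<and> j < i}" by (auto simp: inj_on_def)
    ultimately show ?thesis by (simp add: inv_def card_image)
  qed
  ultimately show ?thesis by (simp add: inv_def)
qed

lemma mp_comm: "valid_mon n k1 \<Longrightarrow> valid_mon n k2 \<Longrightarrow>
  mp k2 k1 = sc ((-1) ^ (card (snd k1) * card (snd k2))) (mp k1 k2)"
proof -
  assume v: "valid_mon n k1" "valid_mon n k2"
  have f: "finite (snd k1)" "finite (snd k2)" using v by (auto simp: valid_fin)
  show ?thesis
  proof (cases "snd k1 \<inter> snd k2 = {}")
    case True
    then have "inv (snd k1) (snd k2) + inv (snd k2) (snd k1) = card (snd k1) * card (snd k2)"
      using inv_swap[OF f] by simp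
    then have e: "inv (snd k2) (snd k1) + 2 * inv (snd k1) (snd k2) = card (snd k1) * card (snd k2) + inv (snd k1) (snd k2)"
      by simp
    have "wsign (snd k2) (snd k1) = (-1::int) ^ (inv (snd k2) (snd k1) + 2 * inv (snd k1) (snd k2))"
      by (simp add: wsign_inv power_add power_mult)
    also have "\<dots> = (-1) ^ (card (snd k1) * card (snd k2)) * wsign (snd k1) (snd k2)"
      by (simp only: e power_add wsign_inv)
    finally have w: "wsign (snd k2) (snd k1) = (-1) ^ (card (snd k1) * card (snd k2)) * wsign (snd k1) (snd k2)" .
    have "madd k2 k1 = madd k1 k2" by (simp add: madd_def add.commute Un_commute)
    then show ?thesis using True w by (simp add: mp_def sc_sc Int_commute)
  next
    case False then show ?thesis by (simp add: mp_def sc_0 Int_commute)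
  qed
qed

lemma rmul_sum_right: "c \<in> Rn n \<Longrightarrow> (\<And>a. a \<in> A \<Longrightarrow> G a \<in> Rn n) \<Longrightarrow> rmul c (sum G A) = (\<Sum>a\<in>A. rmul c (G a))"
  using linop_sum[OF linop_rmul_right] by blast

lemma supercomm: "f \<in> Rn n \<Longrightarrow> (\<And>m. m \<in> supp f \<Longrightarrow> (-1) ^ card (snd m) = ((-1) ^ p :: int)) \<Longrightarrow>
  h \<in> Rn n \<Longrightarrow> rmul h f = rmul f (sigp p h)"
proof -
  assume f: "f \<in> Rn n" and par: "\<And>m. m \<in> supp f \<Longrightarrow> (-1) ^ card (snd m) = ((-1) ^ p :: int)" and h: "h \<in> Rn n"
  have mono_case: "rmul (mono k) f = rmul f (sigp p (mono k))" if k: "valid_mon n k" for k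
  proof -
    have "rmul (mono k) f = (\<Sum>m\<in>supp f. sc (f m) (rmul (mono k) (mono m)))"
      using linop_expand[OF linop_rmul_right[OF Rn_mono[OF k]] f] .
    also have "\<dots> = (\<Sum>m\<in>supp f. sc ((-1) ^ (p * card (snd k))) (sc (f m) (rmul (mono m) (mono k))))"
    proof (rule sum.cong[OF refl])
      fix m assume m: "m \<in> supp f"
      have vm: "valid_mon n m" using f m by (rule Rn_valid)
      have "((-1::int) ^ (card (snd k) * card (snd m))) = ((-1) ^ card (snd m)) ^ card (snd k)"
        by (simp add: power_mult[symmetric] mult.commute)
      also have "\<dots> = (-1) ^ (p * card (snd k))" using par[OF m] by (simp add: power_mult)
      finally have e: "((-1::int) ^ (card (snd k) * card (snd m))) = (-1) ^ (p * card (snd k))" .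
      show "sc (f m) (rmul (mono k) (mono m)) = sc ((-1) ^ (p * card (snd k))) (sc (f m) (rmul (mono m) (mono k)))"
        by (simp add: rmul_mono mp_comm[OF vm k] sc_sc e mult.commute)
    qed
    also have "\<dots> = sc ((-1) ^ (p * card (snd k))) (rmul f (mono k))"
      using linop_expand[OF linop_rmul_left[OF Rn_mono[OF k]] f] by (simp add: sc_sum)
    also have "\<dots> = rmul f (sigp p (mono k))"
      using f k by (simp add: sigp_mono rmul_sc_right Rn_mono)
    finally show ?thesis .
  qed
  show ?thesis
  proof (rule linop_eq[where n=n, of "\<lambda>h. rmul h f" "\<lambda>h. rmul f (sigp p h)"])
    show "linop n (\<lambda>h. rmul h f)" by (rule linop_rmul_left[OF f])
    show "linop n (\<lambda>h. rmul f (sigp p h))" by (rule linop_comp[OF linop_rmul_right[OF f] linop_sigp Rn_sigp])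
  qed (auto intro: mono_case h)
qed

lemma neg1_par: "(-1::int) ^ nat (int c mod 2) = (-1) ^ c"
proof -
  have e: "int c mod 2 = int (c mod 2)" by (simp add: of_nat_mod)
  show ?thesis
  proof (cases "even c")
    case True then have "c mod 2 = 0" by presburger
    then show ?thesis using True e by simp
  next
    case False then have "c mod 2 = 1" by presburger
    then show ?thesis using False e by simp
  qed
qed

definition tot :: "nat \<Rightarrow> (nat \<Rightarrow> nat) \<Rightarrow> nat" where
  "tot n a = (\<Sum>j\<in>{1..n}. a j)"

lemma mdeg_valid: "valid_mon n k \<Longrightarrow>
  mdeg k = (2 * int (tot n (fst k)) - (\<Sum>j\<in>snd k. 2 * int j), 2 * int (card (snd k)))"
proof -
  assume v: "valid_mon n k"
  have "(\<Sum>j\<in>{j. fst k j \<noteq> 0}. fst k j) = (\<Sum>j\<in>{1..n}. fst k j)"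
    using v by (intro sum.mono_neutral_left) (auto simp: valid_mon_def)
  then show ?thesis by (simp add: mdeg_def tot_def)
qed

lemma mdeg_madd: "valid_mon n k1 \<Longrightarrow> valid_mon n k2 \<Longrightarrow> snd k1 \<inter> snd k2 = {} \<Longrightarrow>
  mdeg (madd k1 k2) = (fst (mdeg k1) + fst (mdeg k2), snd (mdeg k1) + snd (mdeg k2))"
proof -
  assume v: "valid_mon n k1" "valid_mon n k2" and d: "snd k1 \<inter> snd k2 = {}"
  have f: "finite (snd k1)" "finite (snd k2)" using v by (auto simp: valid_fin)
  have "tot n (fst (madd k1 k2)) = tot n (fst k1) + tot n (fst k2)"
    by (simp add: tot_def madd_def sum.distrib)
  moreover have "(\<Sum>j\<in>snd (madd k1 k2). 2 * int j) = (\<Sum>j\<in>snd k1. 2 * int j) + (\<Sum>j\<in>snd k2. 2 * int j)"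
    using f d by (simp add: snd_madd sum.union_disjoint)
  moreover have "card (snd (madd k1 k2)) = card (snd k1) + card (snd k2)"
    using f d by (simp add: snd_madd card_Un_disjoint)
  ultimately show ?thesis using mdeg_valid[OF valid_madd[OF v]] mdeg_valid[OF v(1)] mdeg_valid[OF v(2)]
    by simp
qed

lemma homR_zero: "homR n d 0" by (simp add: homR_def Rn_zero supp_def)
lemma homR_add: "homR n d c \<Longrightarrow> homR n d c' \<Longrightarrow> homR n d (c + c')"
  unfolding homR_def supp_def by (metis (mono_tags, lifting) Rn_add add.right_neutral mem_Collect_eq plus_fun_apply)
lemma homR_sc: "homR n d c \<Longrightarrow> homR n d (sc k c)"
  unfolding homR_def using Rn_sc supp_sc by blast
lemma homR_uminus: "homR n d c \<Longrightarrow> homR n d (- c)"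
  by (auto simp: homR_def Rn_uminus supp_def)
lemma homR_diff: "homR n d c \<Longrightarrow> homR n d c' \<Longrightarrow> homR n d (c - c')"
  using homR_add[of n d c "- c'"] homR_uminus[of n d c'] by simp
lemma homR_sum: "(\<And>a. a \<in> A \<Longrightarrow> homR n d (G a)) \<Longrightarrow> homR n d (sum G A)"
  by (induction A rule: infinite_finite_induct) (auto simp: homR_zero homR_add)
lemma homR_mono: "valid_mon n k \<Longrightarrow> homR n (mdeg k) (mono k)"
  by (simp add: homR_def Rn_mono supp_mono)
lemma homR_Rn: "homR n d c \<Longrightarrow> c \<in> Rn n" by (simp add: homR_def)
lemma homR_supp: "homR n d c \<Longrightarrow> m \<in> supp c \<Longrightarrow> mdeg m = d" by (simp add: homR_def)

lemma homR_rmul: "homR n d f \<Longrightarrow> homR n e g \<Longrightarrow> homR n (fst d + fst e, snd d + snd e) (rmul f g)"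
proof -
  assume f: "homR n d f" and g: "homR n e g"
  have R: "f \<in> Rn n" "g \<in> Rn n" using f g by (simp_all add: homR_def)
  show ?thesis unfolding homR_def
  proof (intro conjI ballI)
    show "rmul f g \<in> Rn n" using R by (rule Rn_rmul)
    fix m assume m: "m \<in> supp (rmul f g)"
    then obtain k1 k2 where k: "k1 \<in> supp f" "k2 \<in> supp g" "snd k1 \<inter> snd k2 = {}" "m = madd k1 k2"
      by (blast dest: supp_rmul)
    then show "mdeg m = (fst d + fst e, snd d + snd e)"
      using mdeg_madd[OF Rn_valid[OF R(1) k(1)] Rn_valid[OF R(2) k(2)] k(3)] homR_supp[OF f k(1)] homR_supp[OF g k(2)]
      by simp
  qed
qed

lemma mdeg_one: "mdeg (\<lambda>_. 0, {}) = (0, 0)" by (simp add: mdeg_def)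
lemma homR_rone: "homR n (0, 0) rone"
  unfolding rone_def using homR_mono[OF valid_one, of n] by (simp add: mdeg_one)

lemma homR_parity: "homR n d f \<Longrightarrow> m \<in> supp f \<Longrightarrow> (-1) ^ card (snd m) = ((-1) ^ par d :: int)"
proof -
  assume f: "homR n d f" and m: "m \<in> supp f"
  have "mdeg m = d" using homR_supp[OF f m] .
  then have "snd d = 2 * int (card (snd m))" by (simp add: mdeg_def prod_eq_iff)
  then have "par d = nat (int (card (snd m)) mod 2)" by (simp add: par_def)
  then show ?thesis by (simp add: neg1_par)
qed

lemma homR_sigp: "homR n d y \<Longrightarrow> sigp p y = sc ((-1) ^ (p * par d)) y"
proof (rule ext)
  fix m assume y: "homR n d y"
  show "sigp p y m = sc ((-1) ^ (p * par d)) y m"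
  proof (cases "m \<in> supp y")
    case True
    have "(-1::int) ^ (p * card (snd m)) = ((-1) ^ card (snd m)) ^ p" by (simp add: power_mult[symmetric] mult.commute)
    also have "\<dots> = (-1) ^ (p * par d)" using homR_parity[OF y True] by (simp add: power_mult[symmetric] mult.commute)
    finally show ?thesis by (simp add: sigp_def sc_def)
  next
    case False then show ?thesis by (simp add: sigp_def sc_def supp_def)
  qed
qed

lemma expand_hom: "c \<in> Rn n \<Longrightarrow> k \<in> supp c \<Longrightarrow> homR n (mdeg k) (sc (c k) (mono k))"
  by (intro homR_sc homR_mono Rn_valid)

lemma lin_alt: "finite A \<Longrightarrow> supp c \<subseteq> A \<Longrightarrow> lin F c = (\<Sum>k\<in>A. sc (c k) (F k))"
proof (rule ext)
  fix m assume A: "finite A" "supp c \<subseteq> A"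
  have "lin F c m = (\<Sum>k\<in>supp c. c k * F k m)" by (simp add: lin_def)
  also have "\<dots> = (\<Sum>k\<in>A. c k * F k m)"
    using A by (intro sum.mono_neutral_left) (auto simp: supp_def)
  finally show "lin F c m = (\<Sum>k\<in>A. sc (c k) (F k)) m" by (simp add: sum_fun_apply sc_def)
qed

lemma lin_mono: "lin F (mono k) = F k"
  using lin_alt[of "{k}" "mono k" F] by (simp add: supp_mono sc_1) (simp add: mono_def sc_1)

lemma linop_lin: "linop n (lin F)"
  unfolding linop_def
proof (intro conjI ballI allI)
  fix c d assume c: "c \<in> Rn n" and d: "d \<in> Rn n"
  let ?A = "supp c \<union> supp d"
  have f: "finite ?A" using c d by (simp add: Rn_fin)
  have s: "supp (c + d) \<subseteq> ?A" "supp c \<subseteq> ?A" "supp d \<subseteq> ?A" by (auto simp: supp_def)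
  show "lin F (c + d) = lin F c + lin F d"
    by (simp add: lin_alt[OF f s(1)] lin_alt[OF f s(2)] lin_alt[OF f s(3)] sum.distrib[symmetric] sc_addk)
next
  fix k c assume c: "c \<in> Rn n"
  have f: "finite (supp c)" using c by (simp add: Rn_fin)
  show "lin F (sc k c) = sc k (lin F c)"
    by (simp add: lin_alt[OF f supp_sc] lin_alt[OF f subset_refl] sc_sum sc_sc) (simp add: sc_def)
qed

lemma Rn_lin: "(\<And>k. valid_mon n k \<Longrightarrow> F k \<in> Rn n) \<Longrightarrow> c \<in> Rn n \<Longrightarrow> lin F c \<in> Rn n"
  by (simp add: lin_alt[OF Rn_fin subset_refl] Rn_sum Rn_sc Rn_valid)

lemma homR_lin: "(\<And>k. valid_mon n k \<Longrightarrow> homR n (mdeg k) (F k)) \<Longrightarrow> homR n d c \<Longrightarrow> homR n d (lin F c)"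
proof -
  assume F: "\<And>k. valid_mon n k \<Longrightarrow> homR n (mdeg k) (F k)" and c: "homR n d c"
  have R: "c \<in> Rn n" using c by (rule homR_Rn)
  show ?thesis
    unfolding lin_alt[OF Rn_fin[OF R] subset_refl]
    using F homR_supp[OF c] Rn_valid[OF R] by (intro homR_sum homR_sc) metis
qed

definition Dx :: "nat \<Rightarrow> elt" where "Dx i = xvar i - xvar (i + 1)"

lemma Dx_eq: "radd (xvar i) (rneg (xvar (i + 1))) = Dx i" by (simp add: Dx_def radd_eq rneg_eq)

definition ej :: "nat \<Rightarrow> nat \<Rightarrow> nat" where "ej j = (\<lambda>l. if l = j then 1 else 0)"

lemma xvar_eq: "xvar j = mono (ej j, {})" by (simp add: xvar_def ej_def)

lemma valid_ej: "j \<in> {1..n} \<Longrightarrow> valid_mon n (ej j, {})" by (simp add: valid_mon_def ej_def)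

lemma Rn_xvar: "j \<in> {1..n} \<Longrightarrow> xvar j \<in> Rn n" by (simp add: xvar_eq Rn_mono valid_ej)

lemma Rn_Dx: "1 \<le> i \<Longrightarrow> i < n \<Longrightarrow> Dx i \<in> Rn n" by (simp add: Dx_def Rn_diff Rn_xvar)

definition bump :: "nat \<Rightarrow> mon \<Rightarrow> mon" where "bump j k = ((fst k)(j := fst k j + 1), snd k)"

lemma xvar_mul: "rmul (xvar j) (mono k) = mono (bump j k)"
proof -
  have "madd (ej j, {}) k = bump j k" by (simp add: madd_def bump_def ej_def fun_eq_iff)
  then show ?thesis by (simp add: xvar_eq rmul_mono mp_def wsign_def sc_1)
qed

lemma rmul_uminus_left: "c \<in> Rn n \<Longrightarrow> d \<in> Rn n \<Longrightarrow> rmul (- c) d = - rmul c d"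
  using linop_uminus[OF linop_rmul_left] by blast

lemma rmul_diff_left: "c \<in> Rn n \<Longrightarrow> c' \<in> Rn n \<Longrightarrow> d \<in> Rn n \<Longrightarrow> rmul (c - c') d = rmul c d - rmul c' d"
  using linop_diff[OF linop_rmul_left] by blast

lemma rmul_diff_right: "c \<in> Rn n \<Longrightarrow> d \<in> Rn n \<Longrightarrow> d' \<in> Rn n \<Longrightarrow> rmul c (d - d') = rmul c d - rmul c d'"
  using linop_diff[OF linop_rmul_right] by blast

lemma Dx_mul: "1 \<le> i \<Longrightarrow> i < n \<Longrightarrow> valid_mon n k \<Longrightarrow> rmul (Dx i) (mono k) = mono (bump i k) - mono (bump (i + 1) k)"
proof -
  assume i: "1 \<le> i" "i < n" and v: "valid_mon n k"
  have j: "i \<in> {1..n}" "i + 1 \<in> {1..n}" using i by auto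
  show ?thesis unfolding Dx_def rmul_diff_left[OF Rn_xvar[OF j(1)] Rn_xvar[OF j(2)] Rn_mono[OF v]] xvar_mul ..
qed

lemma tot_ej: "j \<in> {1..n} \<Longrightarrow> tot n (ej j) = 1"
  by (simp add: tot_def ej_def)

lemma mdeg_ej: "j \<in> {1..n} \<Longrightarrow> mdeg (ej j, {}) = (2, 0)"
  using mdeg_valid[OF valid_ej] tot_ej by simp

lemma homR_Dx: "1 \<le> i \<Longrightarrow> i < n \<Longrightarrow> homR n (2, 0) (Dx i)"
  unfolding Dx_def xvar_eq using homR_mono[OF valid_ej, of i n] homR_mono[OF valid_ej, of "i+1" n] mdeg_ej[of i n] mdeg_ej[of "i+1" n]
  by (intro homR_diff) auto

definition tr :: "nat \<Rightarrow> nat \<Rightarrow> nat" where "tr i l = (if l = i then i + 1 else if l = i + 1 then i else l)"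

lemma swapexp_tr: "swapexp i a = (\<lambda>l. a (tr i l))" by (simp add: swapexp_def tr_def)

lemma tr_tr: "tr i (tr i l) = l" by (simp add: tr_def)

lemma tot_swap: "1 \<le> i \<Longrightarrow> i < n \<Longrightarrow> tot n (swapexp i a) = tot n a"
  unfolding tot_def swapexp_tr
  by (rule sum.reindex_bij_witness[of _ "tr i" "tr i"]) (auto simp: tr_def)

lemma valid_swap: "1 \<le> i \<Longrightarrow> i < n \<Longrightarrow> valid_mon n k \<Longrightarrow> valid_mon n (swapexp i (fst k), S) \<longleftrightarrow> S \<subseteq> {1..n}"
  by (auto simp: valid_mon_def swapexp_def)

lemma swapexp_add: "swapexp i (\<lambda>j. a j + b j) = (\<lambda>j. swapexp i a j + swapexp i b j)"
  by (simp add: swapexp_def)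

definition sw :: "nat \<Rightarrow> mon \<Rightarrow> mon" where "sw i k = (swapexp i (fst k), snd k)"
definition ph :: "nat \<Rightarrow> mon \<Rightarrow> mon" where "ph i k = (swapexp i (fst k), insert (i + 1) (snd k - {i}))"
definition PP :: "nat \<Rightarrow> nat set \<Rightarrow> bool" where "PP i S \<longleftrightarrow> i \<in> S \<and> i + 1 \<notin> S"

lemma simg_eq: "simg i k = mono (sw i k) + (if PP i (snd k) then rmul (Dx i) (mono (ph i k)) else 0)"
  unfolding simg_def Let_def radd_eq rneg_eq rzero_eq Dx_def[unfolded diff_conv_add_uminus, symmetric]
  by (simp add: sw_def ph_def PP_def)

lemma valid_sw: "1 \<le> i \<Longrightarrow> i < n \<Longrightarrow> valid_mon n k \<Longrightarrow> valid_mon n (sw i k)"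
  by (simp add: sw_def valid_swap) (simp add: valid_mon_def)

lemma valid_ph: "1 \<le> i \<Longrightarrow> i < n \<Longrightarrow> valid_mon n k \<Longrightarrow> valid_mon n (ph i k)"
  by (simp add: ph_def valid_swap) (auto simp: valid_mon_def)

lemma Rn_simg: "1 \<le> i \<Longrightarrow> i < n \<Longrightarrow> valid_mon n k \<Longrightarrow> simg i k \<in> Rn n"
  by (simp add: simg_eq Rn_add Rn_mono valid_sw Rn_rmul Rn_Dx valid_ph Rn_zero)

lemma mdeg_sw: "1 \<le> i \<Longrightarrow> i < n \<Longrightarrow> valid_mon n k \<Longrightarrow> mdeg (sw i k) = mdeg k"
  using mdeg_valid[OF valid_sw] mdeg_valid[of n k] tot_swap by (simp add: sw_def)

lemma mdeg_ph: "1 \<le> i \<Longrightarrow> i < n \<Longrightarrow> valid_mon n k \<Longrightarrow> PP i (snd k) \<Longrightarrow>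
  mdeg (ph i k) = (fst (mdeg k) - 2, snd (mdeg k))"
proof -
  assume i: "1 \<le> i" "i < n" and v: "valid_mon n k" and P: "PP i (snd k)"
  have f: "finite (snd k)" using v by (rule valid_fin)
  let ?S = "snd k"
  have S: "?S = insert i (?S - {i})" using P by (auto simp: PP_def)
  have "(\<Sum>j\<in>snd (ph i k). 2 * int j) = 2 * int (i + 1) + (\<Sum>j\<in>?S - {i}. 2 * int j)"
    using P f by (simp add: ph_def PP_def)
  moreover have "(\<Sum>j\<in>?S. 2 * int j) = 2 * int i + (\<Sum>j\<in>?S - {i}. 2 * int j)"
    using sum.remove[OF f, of i "\<lambda>j. 2 * int j"] P by (simp add: PP_def)
  moreover have "card (snd (ph i k)) = card ?S"
    using P f by (simp add: ph_def PP_def card_insert_if card_Diff_singleton) (metis card_gt_0_iff empty_iff Suc_pred)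
  ultimately show ?thesis
    using mdeg_valid[OF valid_ph[OF i v]] mdeg_valid[OF v] tot_swap[OF i] by (simp add: ph_def)
qed

lemma homR_simg: "1 \<le> i \<Longrightarrow> i < n \<Longrightarrow> valid_mon n k \<Longrightarrow> homR n (mdeg k) (simg i k)"
proof -
  assume i: "1 \<le> i" "i < n" and v: "valid_mon n k"
  have h1: "homR n (mdeg k) (mono (sw i k))" using homR_mono[OF valid_sw[OF i v]] mdeg_sw[OF i v] by simp
  have h2: "homR n (mdeg k) (rmul (Dx i) (mono (ph i k)))" if P: "PP i (snd k)"
    using homR_rmul[OF homR_Dx[OF i] homR_mono[OF valid_ph[OF i v]]] mdeg_ph[OF i v P] by simp
  show ?thesis unfolding simg_eq using h1 h2 homR_zero by (auto intro: homR_add)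
qed

lemma linop_sact: "linop n (sact i)"
  unfolding sact_def[abs_def] by (rule linop_lin)

lemma Rn_sact: "1 \<le> i \<Longrightarrow> i < n \<Longrightarrow> c \<in> Rn n \<Longrightarrow> sact i c \<in> Rn n"
  unfolding sact_def by (rule Rn_lin[OF Rn_simg])

lemma homR_sact: "1 \<le> i \<Longrightarrow> i < n \<Longrightarrow> homR n d c \<Longrightarrow> homR n d (sact i c)"
  unfolding sact_def by (rule homR_lin[OF homR_simg])

lemma sact_mono: "sact i (mono k) = simg i k" by (simp add: sact_def lin_mono)

lemma sact_rone: "sact i rone = rone"
proof -
  have "sw i (\<lambda>_. 0, {}) = (\<lambda>_. 0, {})" by (simp add: sw_def swapexp_def)
  then show ?thesis by (simp add: rone_def sact_mono simg_eq PP_def)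
qed

lemma par_mdeg: "(-1::int) ^ (p * par (mdeg k)) = (-1) ^ (p * card (snd k))"
proof -
  have "par (mdeg k) = nat (int (card (snd k)) mod 2)" by (simp add: par_def mdeg_def)
  then have "(-1::int) ^ par (mdeg k) = (-1) ^ card (snd k)" by (simp add: neg1_par)
  then show ?thesis unfolding mult.commute[of p] power_mult by simp
qed

lemma sact_sigp:
  assumes i: "1 \<le> i" "i < n" and c: "c \<in> Rn n"
  shows "sact i (sigp p c) = sigp p (sact i c)"
proof (rule linop_eq[where n=n, of "\<lambda>c. sact i (sigp p c)" "\<lambda>c. sigp p (sact i c)"])
  show "linop n (\<lambda>c. sact i (sigp p c))" by (rule linop_comp[OF linop_sact linop_sigp Rn_sigp])
  show "linop n (\<lambda>c. sigp p (sact i c))" by (rule linop_comp[OF linop_sigp linop_sact Rn_sact[OF i]])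
  fix k assume v: "valid_mon n k"
  have "sact i (sigp p (mono k)) = sc ((-1) ^ (p * card (snd k))) (simg i k)"
    unfolding sigp_mono linop_sc[OF linop_sact Rn_mono[OF v]] sact_mono ..
  also have "\<dots> = sigp p (simg i k)"
    unfolding homR_sigp[OF homR_simg[OF i v], of p] par_mdeg ..
  finally show "sact i (sigp p (mono k)) = sigp p (sact i (mono k))" by (simp add: sact_mono)
qed (rule c)

lemma inv_single_left: "finite T \<Longrightarrow> inv {x} T = card {t \<in> T. t < x}"
proof -
  have "{(a, b). a \<in> {x} \<and> b \<in> T \<and> b < a} = (\<lambda>t. (x, t)) ` {t \<in> T. t < x}" by auto
  moreover have "inj_on (\<lambda>t. (x, t)) {t \<in> T. t < x}" by (auto simp: inj_on_def)
  ultimately show ?thesis by (simp add: inv_def card_image)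
qed

lemma inv_single_right: "finite S \<Longrightarrow> inv S {y} = card {s \<in> S. y < s}"
proof -
  have "{(a, b). a \<in> S \<and> b \<in> {y} \<and> b < a} = (\<lambda>s. (s, y)) ` {s \<in> S. y < s}" by auto
  moreover have "inj_on (\<lambda>s. (s, y)) {s \<in> S. y < s}" by (auto simp: inj_on_def)
  ultimately show ?thesis by (simp add: inv_def card_image)
qed

lemma inv_ins_left: "finite A \<Longrightarrow> finite T \<Longrightarrow> x \<notin> A \<Longrightarrow> inv (insert x A) T = inv A T + card {t \<in> T. t < x}"
  using inv_union_left[of "{x}" A T] inv_single_left[of T x] by simp

lemma inv_ins_right: "finite S \<Longrightarrow> finite B \<Longrightarrow> y \<notin> B \<Longrightarrow> inv S (insert y B) = inv S B + card {s \<in> S. y < s}"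
  using inv_union_right[of S "{y}" B] inv_single_right[of S y] by simp

lemma wsign_phL: "finite S \<Longrightarrow> finite T \<Longrightarrow> i \<in> S \<Longrightarrow> i + 1 \<notin> S \<Longrightarrow> i \<notin> T \<Longrightarrow> i + 1 \<notin> T \<Longrightarrow>
  wsign (insert (i + 1) (S - {i})) T = wsign S T"
proof -
  assume f: "finite S" "finite T" and h: "i \<in> S" "i + 1 \<notin> S" "i \<notin> T" "i + 1 \<notin> T"
  have S: "S = insert i (S - {i})" using h by auto
  have e: "{t \<in> T. t < i + 1} = {t \<in> T. t < i}" using h by (auto simp: less_Suc_eq)
  have "inv (insert (i + 1) (S - {i})) T = inv (S - {i}) T + card {t \<in> T. t < i + 1}"
    using f h by (intro inv_ins_left) auto
  moreover have "inv S T = inv (S - {i}) T + card {t \<in> T. t < i}"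
    using f h inv_ins_left[of "S - {i}" T i] S by simp
  ultimately show ?thesis using e by (simp add: wsign_inv)
qed

lemma wsign_phR: "finite S \<Longrightarrow> finite T \<Longrightarrow> i \<in> T \<Longrightarrow> i + 1 \<notin> T \<Longrightarrow> i \<notin> S \<Longrightarrow> i + 1 \<notin> S \<Longrightarrow>
  wsign S (insert (i + 1) (T - {i})) = wsign S T"
proof -
  assume f: "finite S" "finite T" and h: "i \<in> T" "i + 1 \<notin> T" "i \<notin> S" "i + 1 \<notin> S"
  have T: "T = insert i (T - {i})" using h by auto
  have "\<And>s. s \<in> S \<Longrightarrow> i < s \<Longrightarrow> i + 1 < s" using h(4) by (metis Suc_eq_plus1 Suc_lessI)
  then have e: "{s \<in> S. i + 1 < s} = {s \<in> S. i < s}" by auto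
  have "inv S (insert (i + 1) (T - {i})) = inv S (T - {i}) + card {s \<in> S. i + 1 < s}"
    using f h by (intro inv_ins_right) auto
  moreover have "inv S T = inv S (T - {i}) + card {s \<in> S. i < s}"
    using f h inv_ins_right[of S "T - {i}" i] T by simp
  ultimately show ?thesis using e by (simp add: wsign_inv)
qed

lemma wsign_ph3: "finite S \<Longrightarrow> finite T \<Longrightarrow> i \<in> S \<Longrightarrow> i \<in> T \<Longrightarrow> i + 1 \<notin> S \<Longrightarrow> i + 1 \<notin> T \<Longrightarrow>
  wsign S (insert (i + 1) (T - {i})) = - wsign (insert (i + 1) (S - {i})) T"
proof -
  assume f: "finite S" "finite T" and h: "i \<in> S" "i \<in> T" "i + 1 \<notin> S" "i + 1 \<notin> T"
  let ?S0 = "S - {i}" and ?T0 = "T - {i}"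
  have f0: "finite ?S0" "finite ?T0" using f by auto
  have S: "S = insert i ?S0" and T: "T = insert i ?T0" using h by auto
  have a: "inv S (insert (i + 1) ?T0) = inv ?S0 ?T0 + card {s \<in> ?S0. i + 1 < s} + card {t \<in> insert (i + 1) ?T0. t < i}"
  proof -
    have "inv S (insert (i + 1) ?T0) = inv ?S0 (insert (i + 1) ?T0) + card {t \<in> insert (i + 1) ?T0. t < i}"
      using inv_ins_left[of ?S0 "insert (i + 1) ?T0" i] f0 S by simp
    then show ?thesis using inv_ins_right[of ?S0 ?T0 "i + 1"] f0 h by simp
  qed
  have b: "inv (insert (i + 1) ?S0) T = inv ?S0 ?T0 + card {s \<in> ?S0. i < s} + card {t \<in> T. t < i + 1}"
  proof -
    have "inv (insert (i + 1) ?S0) T = inv ?S0 T + card {t \<in> T. t < i + 1}"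
      using inv_ins_left[of ?S0 T "i + 1"] f0 f h by simp
    then show ?thesis using inv_ins_right[of ?S0 ?T0 i] f0 T by simp
  qed
  have e1: "{s \<in> ?S0. i + 1 < s} = {s \<in> ?S0. i < s}" using h by auto (metis Suc_lessI Suc_eq_plus1)
  have e2: "{t \<in> insert (i + 1) ?T0. t < i} = {t \<in> ?T0. t < i}" by auto
  have e3: "{t \<in> T. t < i + 1} = insert i {t \<in> ?T0. t < i}" using h by (auto simp: less_Suc_eq)
  have c3: "card {t \<in> T. t < i + 1} = card {t \<in> ?T0. t < i} + 1"
    unfolding e3 using f0 by (subst card_insert_disjoint) auto
  have "inv (insert (i + 1) ?S0) T = inv S (insert (i + 1) ?T0) + 1"
    using a b e1 e2 c3 by simp
  then show ?thesis by (simp add: wsign_inv)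
qed

lemma mp_nz: "snd k1 \<inter> snd k2 = {} \<Longrightarrow> mp k1 k2 = sc (wsign (snd k1) (snd k2)) (mono (madd k1 k2))"
  by (simp add: mp_def)
lemma mp_z: "snd k1 \<inter> snd k2 \<noteq> {} \<Longrightarrow> mp k1 k2 = 0"
  by (simp add: mp_def)

lemma snd_sw: "snd (sw i k) = snd k" by (simp add: sw_def)
lemma snd_ph: "snd (ph i k) = insert (i + 1) (snd k - {i})" by (simp add: ph_def)

lemma madd_sw: "madd (sw i k1) (sw i k2) = sw i (madd k1 k2)"
  by (simp add: madd_def sw_def swapexp_add)
lemma madd_ph_sw: "i \<notin> snd k2 \<Longrightarrow> madd (ph i k1) (sw i k2) = ph i (madd k1 k2)"
  by (auto simp: madd_def sw_def ph_def swapexp_add)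
lemma madd_sw_ph: "i \<notin> snd k1 \<Longrightarrow> madd (sw i k1) (ph i k2) = ph i (madd k1 k2)"
  by (auto simp: madd_def sw_def ph_def swapexp_add)
lemma madd_ph3: "i \<in> snd k1 \<Longrightarrow> i \<in> snd k2 \<Longrightarrow> madd (sw i k1) (ph i k2) = madd (ph i k1) (sw i k2)"
  by (auto simp: madd_def sw_def ph_def swapexp_add)

lemma Y_lemma:
  assumes f: "finite (snd k1)" "finite (snd k2)"
  shows "(if PP i (snd k2) then mp (sw i k1) (ph i k2) else 0) + (if PP i (snd k1) then mp (ph i k1) (sw i k2) else 0)
    = (if snd k1 \<inter> snd k2 = {} \<and> PP i (snd (madd k1 k2)) then sc (wsign (snd k1) (snd k2)) (mono (ph i (madd k1 k2))) else 0)"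
proof -
  let ?S = "snd k1" and ?T = "snd k2"
  consider (A) "i \<in> ?S" "i \<in> ?T" | (B) "i \<in> ?S" "i \<notin> ?T" | (C) "i \<notin> ?S" "i \<in> ?T" | (D) "i \<notin> ?S" "i \<notin> ?T" by blast
  then show ?thesis
  proof cases
    case A
    have R: "\<not> (?S \<inter> ?T = {})" using A by blast
    show ?thesis
    proof (cases "PP i ?S \<and> PP i ?T")
      case True
      show ?thesis
      proof (cases "(?S - {i}) \<inter> (?T - {i}) = {}")
        case True2: True
        have d1: "snd (sw i k1) \<inter> snd (ph i k2) = {}" and d2: "snd (ph i k1) \<inter> snd (sw i k2) = {}"
          using True True2 by (auto simp: snd_sw snd_ph PP_def)
        have w: "wsign ?S (insert (Suc i) (?T - {i})) = - wsign (insert (Suc i) (?S - {i})) ?T"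
          using wsign_ph3[OF f] A True by (auto simp: PP_def)
        show ?thesis using True R by (simp add: mp_nz[OF d1] mp_nz[OF d2] snd_sw snd_ph w madd_ph3[OF A] sc_def fun_eq_iff)
      next
        case False
        have d1: "snd (sw i k1) \<inter> snd (ph i k2) \<noteq> {}" and d2: "snd (ph i k1) \<inter> snd (sw i k2) \<noteq> {}"
          using False by (auto simp: snd_sw snd_ph)
        show ?thesis using R by (simp add: mp_z[OF d1] mp_z[OF d2])
      qed
    next
      case False
      have z1: "PP i ?T \<Longrightarrow> mp (sw i k1) (ph i k2) = 0" using False A by (intro mp_z) (auto simp: snd_sw snd_ph PP_def)
      have z2: "PP i ?S \<Longrightarrow> mp (ph i k1) (sw i k2) = 0" using False A by (intro mp_z) (auto simp: snd_sw snd_ph PP_def)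
      show ?thesis using R z1 z2 by simp
    qed
  next
    case B
    have nT: "\<not> PP i ?T" using B by (simp add: PP_def)
    show ?thesis
    proof (cases "PP i ?S \<and> i + 1 \<notin> ?T")
      case True
      have e: "snd (ph i k1) \<inter> snd (sw i k2) = {} \<longleftrightarrow> ?S \<inter> ?T = {}"
        using True B by (auto simp: snd_sw snd_ph PP_def)
      have P: "PP i (snd (madd k1 k2))" using True B by (auto simp: PP_def snd_madd)
      show ?thesis
      proof (cases "?S \<inter> ?T = {}")
        case True2: True
        have w: "wsign (insert (Suc i) (?S - {i})) ?T = wsign ?S ?T"
          using wsign_phL[OF f] True B by (auto simp: PP_def)
        show ?thesis using True True2 nT P e B by (simp add: mp_nz snd_sw snd_ph w madd_ph_sw)
      next
        case False
        then show ?thesis using True nT e by (simp add: mp_z)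
      qed
    next
      case False
      have z: "PP i ?S \<Longrightarrow> mp (ph i k1) (sw i k2) = 0" using False by (intro mp_z) (auto simp: snd_sw snd_ph)
      have nP: "\<not> PP i (snd (madd k1 k2))" using False B by (auto simp: PP_def snd_madd)
      show ?thesis using nT z nP by simp
    qed
  next
    case C
    have nS: "\<not> PP i ?S" using C by (simp add: PP_def)
    show ?thesis
    proof (cases "PP i ?T \<and> i + 1 \<notin> ?S")
      case True
      have e: "snd (sw i k1) \<inter> snd (ph i k2) = {} \<longleftrightarrow> ?S \<inter> ?T = {}"
        using True C by (auto simp: snd_sw snd_ph PP_def)
      have P: "PP i (snd (madd k1 k2))" using True C by (auto simp: PP_def snd_madd)
      show ?thesis
      proof (cases "?S \<inter> ?T = {}")
        case True2: True
        have w: "wsign ?S (insert (Suc i) (?T - {i})) = wsign ?S ?T"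
          using wsign_phR[OF f] True C by (auto simp: PP_def)
        show ?thesis using True True2 nS P e C by (simp add: mp_nz snd_sw snd_ph w madd_sw_ph)
      next
        case False
        then show ?thesis using True nS e by (simp add: mp_z)
      qed
    next
      case False
      have z: "PP i ?T \<Longrightarrow> mp (sw i k1) (ph i k2) = 0" using False by (intro mp_z) (auto simp: snd_sw snd_ph)
      have nP: "\<not> PP i (snd (madd k1 k2))" using False C by (auto simp: PP_def snd_madd)
      show ?thesis using nS z nP by simp
    qed
  next
    case D
    then show ?thesis by (simp add: PP_def snd_madd)
  qed
qed

lemma sigp0: "sigp 0 c = c" by (simp add: sigp_def)

lemma par20: "par (2, 0) = 0" by (simp add: par_def)

lemma Dx_comm: "1 \<le> i \<Longrightarrow> i < n \<Longrightarrow> h \<in> Rn n \<Longrightarrow> rmul h (Dx i) = rmul (Dx i) h"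
  using supercomm[of "Dx i" n 0 h] homR_parity[OF homR_Dx, of i n] Rn_Dx[of i n]
  by (simp add: par20 sigp0)

lemma sact_mp:
  assumes i: "1 \<le> i" "i < n" and v1: "valid_mon n k1" and v2: "valid_mon n k2"
  shows "sact i (mp k1 k2) = rmul (simg i k1) (simg i k2)"
proof -
  define M1 where "M1 = mono (sw i k1)"
  define M2 where "M2 = mono (sw i k2)"
  define N1 where "N1 = mono (ph i k1)"
  define N2 where "N2 = mono (ph i k2)"
  define D where "D = Dx i"
  define E1 where "E1 = (if PP i (snd k1) then rmul D N1 else 0)"
  define E2 where "E2 = (if PP i (snd k2) then rmul D N2 else 0)"
  have f: "finite (snd k1)" "finite (snd k2)" using v1 v2 by (simp_all add: valid_fin)
  have RM: "M1 \<in> Rn n" "M2 \<in> Rn n" "N1 \<in> Rn n" "N2 \<in> Rn n" "D \<in> Rn n"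
    unfolding M1_def M2_def N1_def N2_def D_def using i v1 v2
    by (simp_all add: Rn_mono valid_sw valid_ph Rn_Dx)
  have RE: "E1 \<in> Rn n" "E2 \<in> Rn n" unfolding E1_def E2_def using RM by (simp_all add: Rn_rmul Rn_zero)
  have simg1: "simg i k1 = M1 + E1" unfolding simg_eq M1_def E1_def D_def N1_def ..
  have simg2: "simg i k2 = M2 + E2" unfolding simg_eq M2_def E2_def D_def N2_def ..
  have mv: "mp (sw i k1) (ph i k2) \<in> Rn n" "mp (ph i k1) (sw i k2) \<in> Rn n"
    using i v1 v2 by (simp_all add: Rn_mp valid_sw valid_ph)
  have swap: "rmul X (rmul D Z) = rmul D (rmul X Z)" if "X \<in> Rn n" "Z \<in> Rn n" for X Z
  proof -
    have "rmul X (rmul D Z) = rmul (rmul X D) Z" using rmul_assoc[OF that(1) RM(5) that(2)] by simp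
    also have "\<dots> = rmul (rmul D X) Z" unfolding D_def using Dx_comm[OF i that(1)] by simp
    also have "\<dots> = rmul D (rmul X Z)" using rmul_assoc[OF RM(5) that(1) that(2)] .
    finally show ?thesis .
  qed
  have e1: "rmul M1 M2 = mp (sw i k1) (sw i k2)" unfolding M1_def M2_def by (rule rmul_mono)
  have e2: "rmul M1 E2 = (if PP i (snd k2) then rmul D (mp (sw i k1) (ph i k2)) else 0)"
    unfolding E2_def using swap[OF RM(1) RM(4)] by (simp add: rmul_zero_right M1_def N2_def rmul_mono)
  have e3: "rmul E1 M2 = (if PP i (snd k1) then rmul D (mp (ph i k1) (sw i k2)) else 0)"
    unfolding E1_def using rmul_assoc[OF RM(5) RM(3) RM(2)] by (simp add: rmul_zero_left M2_def N1_def rmul_mono)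
  have e4: "rmul E1 E2 = 0"
  proof (cases "PP i (snd k1) \<and> PP i (snd k2)")
    case True
    have z: "rmul N1 N2 = 0" unfolding N1_def N2_def rmul_mono
      by (rule mp_z) (auto simp: snd_ph)
    have "rmul E1 E2 = rmul (rmul D N1) (rmul D N2)" using True by (simp add: E1_def E2_def)
    also have "\<dots> = rmul D (rmul N1 (rmul D N2))" using rmul_assoc[OF RM(5) RM(3) Rn_rmul[OF RM(5) RM(4)]] .
    also have "\<dots> = rmul D (rmul D (rmul N1 N2))" using swap[OF RM(3) RM(4)] by simp
    finally show ?thesis using z by (simp add: rmul_zero_right)
  next
    case False then show ?thesis by (auto simp: E1_def E2_def rmul_zero_left rmul_zero_right)
  qed
  define Y where "Y = (if PP i (snd k2) then mp (sw i k1) (ph i k2) else 0) + (if PP i (snd k1) then mp (ph i k1) (sw i k2) else 0)"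
  have "rmul (simg i k1) (simg i k2) = rmul M1 M2 + rmul M1 E2 + (rmul E1 M2 + rmul E1 E2)"
    unfolding simg1 simg2 using RM RE
    by (simp add: rmul_add_left rmul_add_right Rn_add)
  also have "\<dots> = mp (sw i k1) (sw i k2) + rmul D Y"
    unfolding e1 e2 e3 e4 Y_def using mv RM
    by (simp add: rmul_add_right Rn_zero rmul_zero_right)
  also have "\<dots> = sact i (mp k1 k2)"
  proof (cases "snd k1 \<inter> snd k2 = {}")
    case True
    have "Y = (if PP i (snd (madd k1 k2)) then sc (wsign (snd k1) (snd k2)) (mono (ph i (madd k1 k2))) else 0)"
      unfolding Y_def Y_lemma[OF f] using True by simp
    moreover have "mp (sw i k1) (sw i k2) = sc (wsign (snd k1) (snd k2)) (mono (sw i (madd k1 k2)))"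
      using True by (simp add: mp_nz snd_sw madd_sw)
    moreover have "sact i (mp k1 k2) = sc (wsign (snd k1) (snd k2)) (simg i (madd k1 k2))"
      using True linop_sc[OF linop_sact Rn_mono[OF valid_madd[OF v1 v2]]] by (simp add: mp_nz sact_mono)
    moreover have "rmul D (sc w (mono (ph i (madd k1 k2)))) = sc w (rmul D (mono (ph i (madd k1 k2))))" for w
      using rmul_sc_right[OF RM(5) Rn_mono[OF valid_ph[OF i valid_madd[OF v1 v2]]]] .
    ultimately show ?thesis
      by (simp add: simg_eq sc_add D_def sc_0 rmul_zero_right)
  next
    case False
    have "Y = 0" unfolding Y_def Y_lemma[OF f] using False by simp
    then show ?thesis using False by (simp add: mp_z snd_sw rmul_zero_right linop_zero[OF linop_sact])
  qed
  finally show ?thesis ..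
qed

lemma sact_rmul:
  assumes i: "1 \<le> i" "i < n" and c: "c \<in> Rn n" and d: "d \<in> Rn n"
  shows "sact i (rmul c d) = rmul (sact i c) (sact i d)"
proof -
  have s1: "sact i (rmul (mono k1) d) = rmul (sact i (mono k1)) (sact i d)"
    if k1: "valid_mon n k1" and d: "d \<in> Rn n" for k1 d
  proof (rule linop_eq[where n=n, of "\<lambda>d. sact i (rmul (mono k1) d)" "\<lambda>d. rmul (sact i (mono k1)) (sact i d)"])
    show "linop n (\<lambda>d. sact i (rmul (mono k1) d))"
      by (rule linop_comp[OF linop_sact linop_rmul_right[OF Rn_mono[OF k1]] Rn_rmul[OF Rn_mono[OF k1]]])
    show "linop n (\<lambda>d. rmul (sact i (mono k1)) (sact i d))"
      by (rule linop_comp[OF linop_rmul_right[OF Rn_sact[OF i Rn_mono[OF k1]]] linop_sact Rn_sact[OF i]])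
    show "sact i (rmul (mono k1) (mono k2)) = rmul (sact i (mono k1)) (sact i (mono k2))" if k2: "valid_mon n k2" for k2
      by (simp add: rmul_mono sact_mono sact_mp[OF i k1 k2])
  qed (rule d)
  show ?thesis
  proof (rule linop_eq[where n=n, of "\<lambda>c. sact i (rmul c d)" "\<lambda>c. rmul (sact i c) (sact i d)"])
    show "linop n (\<lambda>c. sact i (rmul c d))"
      by (rule linop_comp[OF linop_sact linop_rmul_left[OF d] Rn_rmul[OF _ d]])
    show "linop n (\<lambda>c. rmul (sact i c) (sact i d))"
      by (rule linop_comp[OF linop_rmul_left[OF Rn_sact[OF i d]] linop_sact Rn_sact[OF i]])
    show "sact i (rmul (mono k1) d) = rmul (sact i (mono k1)) (sact i d)" if "valid_mon n k1" for k1
      by (rule s1[OF that d])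
  qed (rule c)
qed

section \<open>x_i - x_{i+1} is a non-zero-divisor\<close>

lemma bump_inj: "bump j k = bump j k' \<Longrightarrow> k = k'"
  by (cases k, cases k') (auto simp: bump_def fun_eq_iff split: if_splits)

lemma Dx_expand: "1 \<le> i \<Longrightarrow> i < n \<Longrightarrow> q \<in> Rn n \<Longrightarrow>
  rmul (Dx i) q = (\<Sum>k\<in>supp q. sc (q k) (mono (bump i k) - mono (bump (i + 1) k)))"
  using linop_expand[OF linop_rmul_right[OF Rn_Dx] , of i n q] Dx_mul[of i n] Rn_valid[of q n]
  by (metis (no_types, lifting) sum.cong)

lemma Dx_nzd: "1 \<le> i \<Longrightarrow> i < n \<Longrightarrow> q \<in> Rn n \<Longrightarrow> rmul (Dx i) q = 0 \<Longrightarrow> q = 0"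
proof (rule ccontr)
  assume i: "1 \<le> i" "i < n" and q: "q \<in> Rn n" and z: "rmul (Dx i) q = 0" and nz: "q \<noteq> 0"
  have f: "finite (supp q)" using q by (rule Rn_fin)
  have ne: "supp q \<noteq> {}" using nz by (auto simp: supp_def fun_eq_iff)
  let ?f = "\<lambda>k. fst k i"
  have "Max (?f ` supp q) \<in> ?f ` supp q" using f ne by (intro Max_in) auto
  then obtain k0 where k0: "k0 \<in> supp q" "?f k0 = Max (?f ` supp q)" by auto
  have mx: "?f k \<le> ?f k0" if "k \<in> supp q" for k using k0(2) f that by simp
  let ?m = "bump i k0"
  have "rmul (Dx i) q ?m = (\<Sum>k\<in>supp q. q k * (mono (bump i k) ?m - mono (bump (i + 1) k) ?m))"
    by (simp add: Dx_expand[OF i q] sum_fun_apply sc_def)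
  also have "\<dots> = (\<Sum>k\<in>supp q. if k = k0 then q k0 else 0)"
  proof (rule sum.cong[OF refl])
    fix k assume k: "k \<in> supp q"
    have a: "mono (bump i k) ?m = (if k = k0 then 1 else 0)"
      by (auto simp: mono_def dest: bump_inj)
    have b: "mono (bump (Suc i) k) ?m = 0"
    proof -
      have "bump (Suc i) k \<noteq> bump i k0"
      proof
        assume "bump (Suc i) k = bump i k0"
        then have "fst (bump (Suc i) k) i = fst (bump i k0) i" by simp
        then have "?f k = ?f k0 + 1" by (simp add: bump_def)
        with mx[OF k] show False by simp
      qed
      then show ?thesis by (auto simp: mono_def)
    qed
    show "q k * (mono (bump i k) ?m - mono (bump (i + 1) k) ?m) = (if k = k0 then q k0 else 0)"
      by (simp add: a b)
  qed
  also have "\<dots> = q k0" using f k0(1) by simp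
  finally have "rmul (Dx i) q ?m = q k0" .
  then show False using z k0(1) by (simp add: supp_def)
qed

section \<open>telescoping quotient\<close>

primrec tel :: "nat \<Rightarrow> nat \<Rightarrow> nat set \<Rightarrow> (nat \<Rightarrow> nat) \<Rightarrow> elt" where
  "tel i 0 S b = 0"
| "tel i (Suc N) S b = mono (b(i + 1 := b (i + 1) + N), S) + tel i N S (b(i := b i + 1))"

lemma tel_0: "tel i 0 S b = 0" by (simp add: fun_eq_iff)
lemma tel_Suc: "tel i (Suc N) S b = mono (b(i + 1 := b (i + 1) + N), S) + tel i N S (b(i := b i + 1))"
  by (simp add: fun_eq_iff)
declare tel.simps[simp del]

lemma valid_upd: "valid_mon n (b, S) \<Longrightarrow> j \<in> {1..n} \<Longrightarrow> valid_mon n (b(j := x), S)"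
  by (auto simp: valid_mon_def)

lemma tel_Rn: "1 \<le> i \<Longrightarrow> i < n \<Longrightarrow> valid_mon n (b, S) \<Longrightarrow> tel i N S b \<in> Rn n"
proof (induction N arbitrary: b)
  case 0 show ?case unfolding tel_0 by (rule Rn_zero)
next
  case (Suc N)
  have v1: "valid_mon n (b(i + 1 := b (i + 1) + N), S)" using Suc.prems by (intro valid_upd) auto
  have v2: "valid_mon n (b(i := b i + 1), S)" using Suc.prems by (intro valid_upd) auto
  show ?case using Suc.IH[OF Suc.prems(1,2) v2] v1 unfolding tel_Suc by (intro Rn_add Rn_mono)
qed

lemma tel_mul: "1 \<le> i \<Longrightarrow> i < n \<Longrightarrow> valid_mon n (b, S) \<Longrightarrow>
  rmul (Dx i) (tel i N S b) = mono (b(i := b i + N), S) - mono (b(i + 1 := b (i + 1) + N), S)"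
proof (induction N arbitrary: b)
  case 0 show ?case unfolding tel_0 rmul_zero_right by simp
next
  case (Suc N)
  have i: "1 \<le> i" "i < n" using Suc.prems by auto
  have v1: "valid_mon n (b(i + 1 := b (i + 1) + N), S)" using Suc.prems by (intro valid_upd) auto
  have v2: "valid_mon n (b(i := b i + 1), S)" using Suc.prems by (intro valid_upd) auto
  have "rmul (Dx i) (tel i (Suc N) S b) = rmul (Dx i) (mono (b(i + 1 := b (i + 1) + N), S)) + rmul (Dx i) (tel i N S (b(i := b i + 1)))"
    using rmul_add_right[OF Rn_Dx[OF i] Rn_mono[OF v1] tel_Rn[OF i v2]] by (simp only: tel_Suc)
  also have "\<dots> = (mono (bump i (b(i + 1 := b (i + 1) + N), S)) - mono (bump (i + 1) (b(i + 1 := b (i + 1) + N), S)))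
     + (mono ((b(i := b i + 1))(i := (b(i := b i + 1)) i + N), S) - mono ((b(i := b i + 1))(i + 1 := (b(i := b i + 1)) (i + 1) + N), S))"
    by (simp only: Dx_mul[OF i v1] Suc.IH[OF i v2])
  also have "\<dots> = mono (b(i := b i + Suc N), S) - mono (b(i + 1 := b (i + 1) + Suc N), S)"
  proof -
    have e1: "bump i (b(i + 1 := b (i + 1) + N), S) = ((b(i := b i + 1))(i + 1 := (b(i := b i + 1)) (i + 1) + N), S)"
      by (simp add: bump_def fun_eq_iff)
    have e2: "bump (i + 1) (b(i + 1 := b (i + 1) + N), S) = (b(i + 1 := b (i + 1) + Suc N), S)"
      by (simp add: bump_def fun_eq_iff)
    have e3: "((b(i := b i + 1))(i := (b(i := b i + 1)) i + N), S) = (b(i := b i + Suc N), S)"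
      by (simp add: fun_eq_iff)
    show ?thesis unfolding e1 e2 e3 by (simp add: algebra_simps)
  qed
  finally show ?case .
qed

lemma tot_upd: "j \<in> {1..n} \<Longrightarrow> tot n (b(j := x)) + b j = tot n b + x"
proof -
  assume j: "j \<in> {1..n}"
  have a: "tot n (b(j := x)) = x + (\<Sum>l\<in>{1..n} - {j}. b l)"
    using sum.remove[of "{1..n}" j "b(j := x)"] j by (simp add: tot_def)
  have b: "tot n b = b j + (\<Sum>l\<in>{1..n} - {j}. b l)"
    using sum.remove[of "{1..n}" j b] j by (simp add: tot_def)
  show ?thesis using a b by simp
qed

lemma tel_hom: "1 \<le> i \<Longrightarrow> i < n \<Longrightarrow> valid_mon n (b, S) \<Longrightarrow>
  homR n (2 * int (tot n b + N) - 2 - (\<Sum>j\<in>S. 2 * int j), 2 * int (card S)) (tel i N S b)"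
proof (induction N arbitrary: b)
  case 0 show ?case unfolding tel_0 by (rule homR_zero)
next
  case (Suc N)
  have i: "1 \<le> i" "i < n" using Suc.prems by auto
  have v1: "valid_mon n (b(i + 1 := b (i + 1) + N), S)" using Suc.prems by (intro valid_upd) auto
  have v2: "valid_mon n (b(i := b i + 1), S)" using Suc.prems by (intro valid_upd) auto
  have t1: "tot n (b(i + 1 := b (i + 1) + N)) = tot n b + N" using tot_upd[of "i+1" n b "b (i + 1) + N"] i by simp
  have t2: "tot n (b(i := b i + 1)) = tot n b + 1" using tot_upd[of i n b "b i + 1"] i by simp
  have h1: "homR n (2 * int (tot n b + Suc N) - 2 - (\<Sum>j\<in>S. 2 * int j), 2 * int (card S)) (mono (b(i + 1 := b (i + 1) + N), S))"
    using homR_mono[OF v1] mdeg_valid[OF v1] t1 by simp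
  have e: "tot n (b(i := b i + 1)) + N = tot n b + Suc N" using t2 by simp
  have h2: "homR n (2 * int (tot n b + Suc N) - 2 - (\<Sum>j\<in>S. 2 * int j), 2 * int (card S)) (tel i N S (b(i := b i + 1)))"
    using Suc.IH[OF i v2] unfolding e .
  show ?case using homR_add[OF h1 h2] by (simp only: tel_Suc)
qed

definition Qp :: "nat \<Rightarrow> mon \<Rightarrow> elt" where
  "Qp i k = (let a = fst k; p = a i; r = a (i + 1) in
     if r \<le> p then tel i (p - r) (snd k) (a(i := r)) else - tel i (r - p) (snd k) (a(i + 1 := p)))"

lemma swapexp_upd: "swapexp i a = a(i := a (i + 1), i + 1 := a i)"
  by (simp add: swapexp_def fun_eq_iff)
lemma swapexp_upd2: "swapexp i a = a(i + 1 := a i, i := a (i + 1))"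
  by (simp add: swapexp_def fun_eq_iff)

lemma Qp_mul: "1 \<le> i \<Longrightarrow> i < n \<Longrightarrow> valid_mon n k \<Longrightarrow> rmul (Dx i) (Qp i k) = mono k - mono (sw i k)"
proof -
  assume i: "1 \<le> i" "i < n" and v: "valid_mon n k"
  obtain a S where k: "k = (a, S)" by (cases k)
  have vk: "valid_mon n (a, S)" using v k by simp
  show ?thesis
  proof (cases "a (i + 1) \<le> a i")
    case True
    have vb: "valid_mon n (a(i := a (i + 1)), S)" using vk i by (intro valid_upd) auto
    have e1: "(a(i := a (i + 1)))(i := (a(i := a (i + 1))) i + (a i - a (i + 1))) = a"
      using True by (simp add: fun_eq_iff)
    have e2: "(a(i := a (i + 1)))(i + 1 := (a(i := a (i + 1))) (i + 1) + (a i - a (i + 1))) = swapexp i a"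
      using True by (simp add: fun_eq_iff swapexp_def)
    show ?thesis using tel_mul[OF i vb, of "a i - a (i + 1)"] True
      by (simp add: Qp_def Let_def k e1 e2 sw_def swapexp_upd)
  next
    case False
    have vb: "valid_mon n (a(i + 1 := a i), S)" using vk i by (intro valid_upd) auto
    have e1: "(a(i + 1 := a i))(i := (a(i + 1 := a i)) i + (a (i + 1) - a i)) = swapexp i a"
      using False by (simp add: fun_eq_iff swapexp_def)
    have e2: "(a(i + 1 := a i))(i + 1 := (a(i + 1 := a i)) (i + 1) + (a (i + 1) - a i)) = a"
      using False by (simp add: fun_eq_iff)
    have "rmul (Dx i) (Qp i k) = - rmul (Dx i) (tel i (a (i + 1) - a i) S (a(i + 1 := a i)))"
      using False linop_uminus[OF linop_rmul_right[OF Rn_Dx[OF i]] tel_Rn[OF i vb]] by (simp add: Qp_def Let_def k)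
    then show ?thesis using tel_mul[OF i vb, of "a (i + 1) - a i"] False
      by (simp add: k e1 e2 sw_def swapexp_upd2)
  qed
qed

lemma Qp_Rn: "1 \<le> i \<Longrightarrow> i < n \<Longrightarrow> valid_mon n k \<Longrightarrow> Qp i k \<in> Rn n"
proof -
  assume i: "1 \<le> i" "i < n" and v: "valid_mon n k"
  obtain a S where k: "k = (a, S)" by (cases k)
  have v1: "valid_mon n (a(i := a (i + 1)), S)" "valid_mon n (a(i + 1 := a i), S)"
    using v k i by (auto intro!: valid_upd)
  show ?thesis using tel_Rn[OF i v1(1)] tel_Rn[OF i v1(2)] by (simp add: Qp_def Let_def k Rn_uminus)
qed

lemma Qp_hom: "1 \<le> i \<Longrightarrow> i < n \<Longrightarrow> valid_mon n k \<Longrightarrow> homR n (fst (mdeg k) - 2, snd (mdeg k)) (Qp i k)"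
proof -
  assume i: "1 \<le> i" "i < n" and v: "valid_mon n k"
  obtain a S where k: "k = (a, S)" by (cases k)
  have vk: "valid_mon n (a, S)" using v k by simp
  have md: "mdeg k = (2 * int (tot n a) - (\<Sum>j\<in>S. 2 * int j), 2 * int (card S))" using mdeg_valid[OF v] k by simp
  show ?thesis
  proof (cases "a (i + 1) \<le> a i")
    case True
    have vb: "valid_mon n (a(i := a (i + 1)), S)" using vk i by (intro valid_upd) auto
    have t: "tot n (a(i := a (i + 1))) + (a i - a (i + 1)) = tot n a"
      using tot_upd[of i n a "a (i + 1)"] i True by simp
    have Q: "Qp i k = tel i (a i - a (i + 1)) S (a(i := a (i + 1)))" using True by (simp add: Qp_def Let_def k)
    have DE: "(2 * int (tot n (a(i := a (i + 1))) + (a i - a (i + 1))) - 2 - (\<Sum>j\<in>S. 2 * int j), 2 * int (card S))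
       = (fst (mdeg k) - 2, snd (mdeg k))" unfolding t md by simp
    show ?thesis unfolding Q DE[symmetric] by (rule tel_hom[OF i vb])
  next
    case False
    have vb: "valid_mon n (a(i + 1 := a i), S)" using vk i by (intro valid_upd) auto
    have t: "tot n (a(i + 1 := a i)) + (a (i + 1) - a i) = tot n a"
      using tot_upd[of "i + 1" n a "a i"] i False by simp
    have Q: "Qp i k = - tel i (a (i + 1) - a i) S (a(i + 1 := a i))" using False by (simp add: Qp_def Let_def k)
    have DE: "(2 * int (tot n (a(i + 1 := a i)) + (a (i + 1) - a i)) - 2 - (\<Sum>j\<in>S. 2 * int j), 2 * int (card S))
       = (fst (mdeg k) - 2, snd (mdeg k))" unfolding t md by simp
    show ?thesis unfolding Q DE[symmetric] by (rule homR_uminus[OF tel_hom[OF i vb]])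
  qed
qed

definition qmono :: "nat \<Rightarrow> mon \<Rightarrow> elt" where
  "qmono i k = Qp i k - (if PP i (snd k) then mono (ph i k) else 0)"

lemma qmono_Rn: "1 \<le> i \<Longrightarrow> i < n \<Longrightarrow> valid_mon n k \<Longrightarrow> qmono i k \<in> Rn n"
  by (simp add: qmono_def Rn_diff Qp_Rn Rn_mono valid_ph Rn_zero)

lemma qmono_mul: "1 \<le> i \<Longrightarrow> i < n \<Longrightarrow> valid_mon n k \<Longrightarrow> rmul (Dx i) (qmono i k) = mono k - simg i k"
proof -
  assume i: "1 \<le> i" "i < n" and v: "valid_mon n k"
  have R: "(if PP i (snd k) then mono (ph i k) else 0) \<in> Rn n" by (simp add: Rn_mono valid_ph[OF i v] Rn_zero)
  have "rmul (Dx i) (qmono i k) = rmul (Dx i) (Qp i k) - rmul (Dx i) (if PP i (snd k) then mono (ph i k) else 0)"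
    unfolding qmono_def using rmul_diff_right[OF Rn_Dx[OF i] Qp_Rn[OF i v] R] .
  also have "\<dots> = mono k - simg i k"
    by (simp add: Qp_mul[OF i v] simg_eq rmul_zero_right)
  finally show ?thesis .
qed

lemma qmono_hom: "1 \<le> i \<Longrightarrow> i < n \<Longrightarrow> valid_mon n k \<Longrightarrow> homR n (fst (mdeg k) - 2, snd (mdeg k)) (qmono i k)"
  unfolding qmono_def using Qp_hom[of i n k] homR_mono[OF valid_ph, of i n k] mdeg_ph[of i n k]
  by (auto intro!: homR_diff simp: homR_zero)

definition qdiv :: "nat \<Rightarrow> elt \<Rightarrow> elt" where "qdiv i c = lin (qmono i) c"

lemma qdiv_Rn: "1 \<le> i \<Longrightarrow> i < n \<Longrightarrow> c \<in> Rn n \<Longrightarrow> qdiv i c \<in> Rn n"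
  unfolding qdiv_def by (rule Rn_lin[OF qmono_Rn])

lemma qdiv_mul:
  assumes i: "1 \<le> i" "i < n" and c: "c \<in> Rn n"
  shows "rmul (Dx i) (qdiv i c) = c - sact i c"
proof (rule linop_eq[where n=n, of "\<lambda>c. rmul (Dx i) (qdiv i c)" "\<lambda>c. c - sact i c"])
  show "linop n (\<lambda>c. rmul (Dx i) (qdiv i c))"
    unfolding qdiv_def by (rule linop_comp[OF linop_rmul_right[OF Rn_Dx[OF i]] linop_lin Rn_lin[OF qmono_Rn[OF i]]])
  show "linop n (\<lambda>c. c - sact i c)"
    using linop_sact[of n i] unfolding linop_def by (simp add: sc_minus algebra_simps)
  fix k assume v: "valid_mon n k"
  show "rmul (Dx i) (qdiv i (mono k)) = mono k - sact i (mono k)"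
    by (simp add: qdiv_def lin_mono qmono_mul[OF i v] sact_mono)
qed (rule c)

lemma homR_lin2: "(\<And>k. valid_mon n k \<Longrightarrow> homR n (g (mdeg k)) (F k)) \<Longrightarrow> homR n d c \<Longrightarrow> homR n (g d) (lin F c)"
proof -
  assume F: "\<And>k. valid_mon n k \<Longrightarrow> homR n (g (mdeg k)) (F k)" and c: "homR n d c"
  have R: "c \<in> Rn n" using c by (rule homR_Rn)
  show ?thesis
    unfolding lin_alt[OF Rn_fin[OF R] subset_refl]
    using F homR_supp[OF c] Rn_valid[OF R] by (intro homR_sum homR_sc) metis
qed

lemma qdiv_hom: "1 \<le> i \<Longrightarrow> i < n \<Longrightarrow> homR n e c \<Longrightarrow> homR n (fst e - 2, snd e) (qdiv i c)"
  unfolding qdiv_def using homR_lin2[of n "\<lambda>d. (fst d - 2, snd d)" "qmono i" e c] qmono_hom[of i n] by simp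

section \<open>Demazure operator\<close>

lemma dem_alt: "dem n i c = (THE g. g \<in> Rn n \<and> rmul (Dx i) g = c - sact i c)"
  unfolding dem_def radd_eq rneg_eq diff_conv_add_uminus[symmetric] Dx_def ..

lemma dem_eq: "1 \<le> i \<Longrightarrow> i < n \<Longrightarrow> c \<in> Rn n \<Longrightarrow> dem n i c = qdiv i c"
proof -
  assume i: "1 \<le> i" "i < n" and c: "c \<in> Rn n"
  show ?thesis unfolding dem_alt
  proof (rule the_equality)
    show "qdiv i c \<in> Rn n \<and> rmul (Dx i) (qdiv i c) = c - sact i c"
      using qdiv_Rn[OF i c] qdiv_mul[OF i c] by simp
    fix g assume g: "g \<in> Rn n \<and> rmul (Dx i) g = c - sact i c"
    have "rmul (Dx i) (g - qdiv i c) = 0"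
      using rmul_diff_right[OF Rn_Dx[OF i] conjunct1[OF g] qdiv_Rn[OF i c]] g qdiv_mul[OF i c] by simp
    then have "g - qdiv i c = 0" using Dx_nzd[OF i Rn_diff[OF conjunct1[OF g] qdiv_Rn[OF i c]]] by simp
    then show "g = qdiv i c" by simp
  qed
qed

lemma dem_unique: "1 \<le> i \<Longrightarrow> i < n \<Longrightarrow> c \<in> Rn n \<Longrightarrow> g \<in> Rn n \<Longrightarrow> rmul (Dx i) g = c - sact i c \<Longrightarrow> dem n i c = g"
proof -
  assume i: "1 \<le> i" "i < n" and c: "c \<in> Rn n" and g: "g \<in> Rn n" and e: "rmul (Dx i) g = c - sact i c"
  have "rmul (Dx i) (g - qdiv i c) = 0"
    using rmul_diff_right[OF Rn_Dx[OF i] g qdiv_Rn[OF i c]] e qdiv_mul[OF i c] by simp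
  then have "g - qdiv i c = 0" using Dx_nzd[OF i Rn_diff[OF g qdiv_Rn[OF i c]]] by simp
  then show ?thesis using dem_eq[OF i c] by simp
qed

context
  fixes n i :: nat
  assumes i: "1 \<le> i" "i < n"
begin

lemma dem_Rn: "c \<in> Rn n \<Longrightarrow> dem n i c \<in> Rn n"
  using dem_eq[OF i] qdiv_Rn[OF i] by simp

lemma dem_mul: "c \<in> Rn n \<Longrightarrow> rmul (Dx i) (dem n i c) = c - sact i c"
  using dem_eq[OF i] qdiv_mul[OF i] by simp

lemma dem_add: "c \<in> Rn n \<Longrightarrow> d \<in> Rn n \<Longrightarrow> dem n i (c + d) = dem n i c + dem n i d"
  using dem_eq[OF i] Rn_add[of c n d] linop_add[OF linop_lin[of n "qmono i"], of c d] by (simp add: qdiv_def)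

lemma dem_hom: "homR n e c \<Longrightarrow> homR n (fst e - 2, snd e) (dem n i c)"
  using dem_eq[OF i homR_Rn] qdiv_hom[OF i] by simp

lemma dem_rone: "dem n i rone = 0"
  using dem_unique[OF i Rn_rone Rn_zero] by (simp add: rmul_zero_right sact_rone)

lemma sigp_Dx: "sigp p (Dx i) = Dx i"
  using homR_sigp[OF homR_Dx[OF i], of p] by (simp add: par20 sc_1)

lemma dem_inv: "f \<in> Rn n \<Longrightarrow> sact i f = f \<Longrightarrow> g \<in> Rn n \<Longrightarrow> dem n i (rmul f g) = rmul f (dem n i g)"
proof -
  assume f: "f \<in> Rn n" and inv: "sact i f = f" and g: "g \<in> Rn n"
  have q: "dem n i g \<in> Rn n" using dem_Rn[OF g] .
  have D: "Dx i \<in> Rn n" using Rn_Dx[OF i] .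
  have "rmul (Dx i) (rmul f (dem n i g)) = rmul (rmul (Dx i) f) (dem n i g)" using rmul_assoc[OF D f q] by simp
  also have "\<dots> = rmul (rmul f (Dx i)) (dem n i g)" using Dx_comm[OF i f] by simp
  also have "\<dots> = rmul f (rmul (Dx i) (dem n i g))" using rmul_assoc[OF f D q] .
  also have "\<dots> = rmul f (g - sact i g)" using dem_mul[OF g] by simp
  also have "\<dots> = rmul f g - rmul (sact i f) (sact i g)" using rmul_diff_right[OF f g Rn_sact[OF i g]] inv by simp
  also have "\<dots> = rmul f g - sact i (rmul f g)" using sact_rmul[OF i f g] by simp
  finally show ?thesis by (intro dem_unique[OF i Rn_rmul[OF f g] Rn_rmul[OF f q]])
qed

lemma dem_sigp: "c \<in> Rn n \<Longrightarrow> dem n i (sigp p c) = sigp p (dem n i c)"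
proof -
  assume c: "c \<in> Rn n"
  have q: "dem n i c \<in> Rn n" using dem_Rn[OF c] .
  have "rmul (Dx i) (sigp p (dem n i c)) = sigp p (rmul (Dx i) (dem n i c))"
    using sigp_rmul[OF Rn_Dx[OF i] q, of p] sigp_Dx by simp
  also have "\<dots> = sigp p c - sact i (sigp p c)"
    using dem_mul[OF c] sact_sigp[OF i c] linop_diff[OF linop_sigp c Rn_sact[OF i c]] by simp
  finally show ?thesis by (intro dem_unique[OF i Rn_sigp[OF c] Rn_sigp[OF q]])
qed

end

section \<open>properties of A_n\<close>

lemma zero_eta: "(\<lambda>a. 0) = (0::elt)" by (simp add: zero_fun_def)
lemma plus_eta: "(\<lambda>a. f a + g a) = (f + g :: elt)" by (simp add: plus_fun_def)

definition addop :: "nat \<Rightarrow> (elt \<Rightarrow> elt) \<Rightarrow> bool" where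
  "addop n T \<longleftrightarrow> (\<forall>g. g \<notin> Rn n \<longrightarrow> T g = 0) \<and> (\<forall>g\<in>Rn n. T g \<in> Rn n) \<and>
     (\<forall>g\<in>Rn n. \<forall>h\<in>Rn n. T (g + h) = T g + T h)"

lemma addop_zero: "addop n T \<Longrightarrow> T 0 = 0"
proof -
  assume "addop n T"
  then have "T (0 + 0) = T 0 + T 0" using Rn_zero unfolding addop_def by blast
  then show ?thesis by simp
qed

lemma An_addop: "T \<in> An n \<Longrightarrow> addop n T"
proof (induction rule: An.induct)
  case (mul f)
  then show ?case by (simp add: addop_def mulop_def restr_def rzero_eq Rn_rmul rmul_add_right Rn_add)
next
  case (dem i)
  then show ?case by (simp add: addop_def demop_def restr_def rzero_eq dem_Rn dem_add Rn_add)
next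
  case (add T U)
  then show ?case by (simp add: addop_def opadd_def radd_eq Rn_add algebra_simps zero_eta plus_eta)
next
  case (comp T U)
  have z: "T 0 = 0" using comp.IH(1) by (rule addop_zero)
  show ?case using comp.IH z by (simp add: addop_def)
qed

lemma An_out: "T \<in> An n \<Longrightarrow> g \<notin> Rn n \<Longrightarrow> T g = 0" using An_addop unfolding addop_def by blast
lemma An_Rn: "T \<in> An n \<Longrightarrow> g \<in> Rn n \<Longrightarrow> T g \<in> Rn n" using An_addop unfolding addop_def by blast
lemma An_add: "T \<in> An n \<Longrightarrow> g \<in> Rn n \<Longrightarrow> h \<in> Rn n \<Longrightarrow> T (g + h) = T g + T h"
  using An_addop unfolding addop_def by blast
lemma An_zero: "T \<in> An n \<Longrightarrow> T 0 = 0" using An_addop addop_zero by blast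
lemma An_uminus: "T \<in> An n \<Longrightarrow> g \<in> Rn n \<Longrightarrow> T (- g) = - T g"
  using An_add[of T n g "- g"] An_zero[of T n] Rn_uminus[of g n] by (simp add: eq_neg_iff_add_eq_0 add.commute)
lemma An_sc1: "T \<in> An n \<Longrightarrow> g \<in> Rn n \<Longrightarrow> t = 1 \<or> t = -1 \<Longrightarrow> T (sc t g) = sc t (T g)"
  using An_uminus[of T n g] by (auto simp: sc_1 sc_neg1)

lemma An_sum: "T \<in> An n \<Longrightarrow> (\<And>a. a \<in> A \<Longrightarrow> G a \<in> Rn n) \<Longrightarrow> T (sum G A) = (\<Sum>a\<in>A. T (G a))"
proof (induction A rule: infinite_finite_induct)
  case (infinite A)
  then have "sum G A = 0" "(\<Sum>a\<in>A. T (G a)) = 0" by auto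
  then show ?case using An_zero[OF infinite(2)] by metis
next
  case empty then show ?case using An_zero[of T n] by (subst sum.empty)+ simp
next
  case (insert x B)
  have "T (sum G (insert x B)) = T (G x + sum G B)" using insert(1,2) by (subst sum.insert) auto
  also have "\<dots> = T (G x) + T (sum G B)" using insert by (intro An_add Rn_sum) auto
  also have "\<dots> = T (G x) + (\<Sum>a\<in>B. T (G a))" using insert by simp
  also have "\<dots> = (\<Sum>a\<in>insert x B. T (G a))" using insert(1,2) by (subst sum.insert) auto
  finally show ?case .
qed

lemma An_expand: "T \<in> An n \<Longrightarrow> g \<in> Rn n \<Longrightarrow> T g = (\<Sum>k\<in>supp g. T (sc (g k) (mono k)))"
proof -
  assume T: "T \<in> An n" and g: "g \<in> Rn n"
  have "T g = T (\<Sum>k\<in>supp g. sc (g k) (mono k))" using expand[OF g] by simp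
  also have "\<dots> = (\<Sum>k\<in>supp g. T (sc (g k) (mono k)))"
    by (rule An_sum[OF T]) (meson Rn_sc Rn_mono Rn_valid g)
  finally show ?thesis .
qed

lemma mulop_in: "g \<in> Rn n \<Longrightarrow> mulop n f g = rmul f g" by (simp add: mulop_def restr_def)
lemma mulop_out: "g \<notin> Rn n \<Longrightarrow> mulop n f g = 0" by (simp add: mulop_def restr_def rzero_eq)
lemma demop_in: "g \<in> Rn n \<Longrightarrow> demop n i g = dem n i g" by (simp add: demop_def restr_def)

lemma hom_op_mulop: "homR n e f \<Longrightarrow> hom_op n e (mulop n f)"
  unfolding hom_op_def using homR_rmul[of n e f] by (simp add: mulop_in homR_Rn)

lemma hom_op_demop: "1 \<le> i \<Longrightarrow> i < n \<Longrightarrow> hom_op n (-2, 0) (demop n i)"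
  unfolding hom_op_def using dem_hom[of i n] by (simp add: demop_in homR_Rn)

lemma sg_par: "(-1::int) ^ (par d) = (if even (snd d div 2) then 1 else -1)"
proof -
  have "snd d div 2 mod 2 = (if even (snd d div 2) then 0 else 1)" by presburger
  then show ?thesis by (simp add: par_def)
qed

lemma par_sum: "snd E = 2 * int b \<Longrightarrow> snd e + snd E = 2 * int c \<Longrightarrow>
  (-1::int) ^ (par (fst e + fst E, snd e + snd E)) * (-1) ^ (par E) = (-1) ^ (par e)"
proof -
  assume b: "snd E = 2 * int b" and c: "snd e + snd E = 2 * int c"
  have e: "snd e = 2 * (int c - int b)" using b c by simp
  have "(snd e + snd E) div 2 = int c" "snd E div 2 = int b" "snd e div 2 = int c - int b"
    using b c e by simp_all
  then show ?thesis unfolding sg_par by auto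
qed

lemma sq_sign: "((-1::int) ^ k) * ((-1) ^ k) = 1"
  by (simp add: power_add[symmetric] mult_2[symmetric] power_mult)

lemma hom_twist_mono:
  assumes a: "a \<in> An n" and ha: "hom_op n e a" and y: "homR n E y" and E: "snd E = 2 * int b"
  shows "sigp p (a (sigp p y)) = sc ((-1) ^ (p * par e)) (a y)"
proof -
  let ?t = "(-1::int) ^ (p * par E)"
  have yR: "y \<in> Rn n" using y by (rule homR_Rn)
  have t: "?t = 1 \<or> ?t = -1" by (cases "even (p * par E)") simp_all
  have ay: "homR n (fst e + fst E, snd e + snd E) (a y)" using ha y by (simp add: hom_op_def)
  have "sigp p (a (sigp p y)) = sigp p (a (sc ?t y))" using homR_sigp[OF y] by simp
  also have "\<dots> = sigp p (sc ?t (a y))" using An_sc1[OF a yR t] by simp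
  also have "\<dots> = sc ?t (sc ((-1) ^ (p * par (fst e + fst E, snd e + snd E))) (a y))"
    using homR_sigp[OF ay, of p] by (simp add: sigp_sc)
  also have "\<dots> = sc ((-1) ^ (p * par e)) (a y)"
  proof (cases "a y = 0")
    case True then show ?thesis by (simp add: sc_0)
  next
    case False
    then obtain m where m: "m \<in> supp (a y)" by (auto simp: supp_def fun_eq_iff)
    have "mdeg m = (fst e + fst E, snd e + snd E)" using homR_supp[OF ay m] .
    then have c: "snd e + snd E = 2 * int (card (snd m))" by (simp add: mdeg_def prod_eq_iff)
    have ps: "(-1::int) ^ (par (fst e + fst E, snd e + snd E)) * (-1) ^ (par E) = (-1) ^ (par e)"
      by (rule par_sum[OF E c])
    have "?t * (-1) ^ (p * par (fst e + fst E, snd e + snd E)) = ((-1) ^ (par (fst e + fst E, snd e + snd E)) * (-1) ^ (par E)) ^ p"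
      by (simp add: power_mult[symmetric] mult.commute power_mult_distrib)
    also have "\<dots> = (-1) ^ (p * par e)" unfolding ps by (simp add: power_mult[symmetric] mult.commute)
    finally show ?thesis by (simp add: sc_sc)
  qed
  finally show ?thesis .
qed

lemma hom_twist:
  assumes a: "a \<in> An n" and ha: "hom_op n e a" and g: "g \<in> Rn n"
  shows "sigp p (a (sigp p g)) = sc ((-1) ^ (p * par e)) (a g)"
proof -
  let ?y = "\<lambda>k. sc (g k) (mono k)"
  have yR: "\<And>k. k \<in> supp g \<Longrightarrow> ?y k \<in> Rn n" by (meson Rn_sc Rn_mono Rn_valid g)
  have "sigp p (a (sigp p g)) = sigp p (a (\<Sum>k\<in>supp g. sigp p (?y k)))"
    using linop_expand[OF linop_sigp g, of p] by (simp add: sigp_sc)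
  also have "\<dots> = sigp p (\<Sum>k\<in>supp g. a (sigp p (?y k)))"
    using An_sum[OF a, of "supp g" "\<lambda>k. sigp p (?y k)"] yR Rn_sigp by simp
  also have "\<dots> = (\<Sum>k\<in>supp g. sigp p (a (sigp p (?y k))))"
    using linop_sum[OF linop_sigp, of "supp g" "\<lambda>k. a (sigp p (?y k))" n p] yR Rn_sigp An_Rn[OF a] by simp
  also have "\<dots> = (\<Sum>k\<in>supp g. sc ((-1) ^ (p * par e)) (a (?y k)))"
  proof (rule sum.cong[OF refl])
    fix k assume k: "k \<in> supp g"
    have E: "snd (mdeg k) = 2 * int (card (snd k))" by (simp add: mdeg_def)
    show "sigp p (a (sigp p (?y k))) = sc ((-1) ^ (p * par e)) (a (?y k))"
      by (rule hom_twist_mono[OF a ha expand_hom[OF g k] E])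
  qed
  also have "\<dots> = sc ((-1) ^ (p * par e)) (a g)"
    using An_expand[OF a g] by (simp add: sc_sum)
  finally show ?thesis .
qed

lemma twist:
  assumes F: "F \<in> Rn n" and inv: "\<And>i. 1 \<le> i \<Longrightarrow> i < n \<Longrightarrow> sact i F = F"
    and par: "\<And>m. m \<in> supp F \<Longrightarrow> (-1) ^ card (snd m) = ((-1) ^ p :: int)"
    and a: "a \<in> An n"
  shows "\<forall>g\<in>Rn n. a (rmul F g) = rmul F (sigp p (a (sigp p g)))"
  using a
proof (induction rule: An.induct)
  case (mul h)
  show ?case
  proof
    fix g assume g: "g \<in> Rn n"
    have "rmul F (sigp p (mulop n h (sigp p g))) = rmul F (sigp p (rmul h (sigp p g)))"
      using g by (simp add: mulop_in Rn_sigp)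
    also have "\<dots> = rmul F (rmul (sigp p h) g)" using sigp_rmul[OF mul Rn_sigp[OF g]] by (simp add: sigp_sigp)
    also have "\<dots> = rmul (rmul F (sigp p h)) g" using rmul_assoc[OF F Rn_sigp[OF mul] g] by simp
    also have "\<dots> = rmul (rmul h F) g" using supercomm[OF F par mul] by simp
    also have "\<dots> = rmul h (rmul F g)" using rmul_assoc[OF mul F g] .
    also have "\<dots> = mulop n h (rmul F g)" using Rn_rmul[OF F g] by (simp add: mulop_in)
    finally show "mulop n h (rmul F g) = rmul F (sigp p (mulop n h (sigp p g)))" by simp
  qed
next
  case (dem i)
  show ?case
  proof
    fix g assume g: "g \<in> Rn n"
    have "demop n i (rmul F g) = rmul F (dem n i g)"
      using Rn_rmul[OF F g] dem_inv[OF dem F inv[OF dem] g] by (simp add: demop_in)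
    also have "\<dots> = rmul F (sigp p (demop n i (sigp p g)))"
      using dem_sigp[OF dem g, of p] g by (simp add: demop_in Rn_sigp sigp_sigp)
    finally show "demop n i (rmul F g) = rmul F (sigp p (demop n i (sigp p g)))" .
  qed
next
  case (add T U)
  show ?case
  proof
    fix g assume g: "g \<in> Rn n"
    have R: "T (sigp p g) \<in> Rn n" "U (sigp p g) \<in> Rn n" using An_Rn[OF add.hyps(1)] An_Rn[OF add.hyps(2)] Rn_sigp[OF g] by auto
    have "opadd T U (rmul F g) = rmul F (sigp p (T (sigp p g))) + rmul F (sigp p (U (sigp p g)))"
      using add.IH g by (simp add: opadd_def radd_eq)
    also have "\<dots> = rmul F (sigp p (opadd T U (sigp p g)))"
      using rmul_add_right[OF F Rn_sigp[OF R(1)] Rn_sigp[OF R(2)]] by (simp add: opadd_def radd_eq sigp_add)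
    finally show "opadd T U (rmul F g) = rmul F (sigp p (opadd T U (sigp p g)))" .
  qed
next
  case (comp T U)
  show ?case
  proof
    fix g assume g: "g \<in> Rn n"
    have R: "sigp p (U (sigp p g)) \<in> Rn n" using An_Rn[OF comp.hyps(2)] Rn_sigp[OF g] Rn_sigp by blast
    have "(T \<circ> U) (rmul F g) = T (rmul F (sigp p (U (sigp p g))))" using comp.IH(2) g by simp
    also have "\<dots> = rmul F (sigp p (T (sigp p (sigp p (U (sigp p g))))))" using comp.IH(1) R by blast
    finally show "(T \<circ> U) (rmul F g) = rmul F (sigp p ((T \<circ> U) (sigp p g)))" by (simp add: sigp_sigp)
  qed
qed

lemma inv_HZ:
  assumes F: "F \<in> Rinv n" and D: "homR n D F"
  shows "mulop n F \<in> HZ n"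
proof -
  have FR: "F \<in> Rn n" using F by (simp add: Rinv_def)
  have inv: "\<And>i. 1 \<le> i \<Longrightarrow> i < n \<Longrightarrow> sact i F = F" using F by (simp add: Rinv_def)
  let ?p = "par D"
  have par: "\<And>m. m \<in> supp F \<Longrightarrow> (-1) ^ card (snd m) = ((-1) ^ ?p :: int)" using homR_parity[OF D] .
  have comm: "mulop n F \<circ> a = opscale ((-1) ^ (par D * par e)) (a \<circ> mulop n F)"
    if a: "a \<in> An n" and ha: "hom_op n e a" for a e
  proof (rule ext)
    fix g
    let ?s = "(-1::int) ^ (par D * par e)"
    show "(mulop n F \<circ> a) g = opscale ?s (a \<circ> mulop n F) g"
    proof (cases "g \<in> Rn n")
      case True
      have "opscale ?s (a \<circ> mulop n F) g = sc ?s (a (rmul F g))"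
        using True by (simp add: opscale_def sc_def mulop_in)
      also have "\<dots> = sc ?s (rmul F (sigp ?p (a (sigp ?p g))))"
        using twist[OF FR inv par a] True by simp
      also have "\<dots> = sc ?s (rmul F (sc ?s (a g)))" using hom_twist[OF a ha True] by simp
      also have "\<dots> = rmul F (a g)"
        using rmul_sc_right[OF FR An_Rn[OF a True]] by (simp add: sc_sc sq_sign sc_1)
      also have "\<dots> = (mulop n F \<circ> a) g" using An_Rn[OF a True] by (simp add: mulop_in)
      finally show ?thesis by simp
    next
      case False
      have "(mulop n F \<circ> a) g = 0" using An_out[OF a False] Rn_zero by (simp add: mulop_in rmul_zero_right)
      moreover have "opscale ?s (a \<circ> mulop n F) g = 0"
        using False An_zero[OF a] by (simp add: opscale_def mulop_out fun_eq_iff)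
      ultimately show ?thesis by simp
    qed
  qed
  show ?thesis unfolding HZ_def using An.mul[OF FR] hom_op_mulop[OF D] comm by blast
qed

lemma par_m20: "par (-2, 0) = 0" by (simp add: par_def)

lemma HZ_char:
  assumes x: "x \<in> HZ n"
  shows "\<exists>h\<in>Rinv n. x = mulop n h"
proof -
  obtain d where xA: "x \<in> An n" and hd: "hom_op n d x"
    and scm: "\<And>a e. a \<in> An n \<Longrightarrow> hom_op n e a \<Longrightarrow> x \<circ> a = opscale ((-1) ^ (par d * par e)) (a \<circ> x)"
    using x unfolding HZ_def by blast
  define h where "h = x rone"
  have hh: "homR n d h" using hd homR_rone unfolding hom_op_def h_def by fastforce
  have hR: "h \<in> Rn n" using hh by (rule homR_Rn)
  have xg_hom: "x g = rmul h g" if g: "homR n e g" for g e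
  proof -
    let ?s = "(-1::int) ^ (par d * par e)"
    have gR: "g \<in> Rn n" using g by (rule homR_Rn)
    have "(x \<circ> mulop n g) rone = opscale ?s (mulop n g \<circ> x) rone"
      using scm[OF An.mul[OF gR] hom_op_mulop[OF g]] by simp
    then have "x g = sc ?s (rmul g h)"
      by (simp add: mulop_in Rn_rone rmul_one_right[OF gR] opscale_def sc_def h_def[symmetric] hR)
    also have "rmul g h = rmul h (sigp (par d) g)"
      using supercomm[OF hR homR_parity[OF hh] gR] .
    also have "\<dots> = sc ?s (rmul h g)"
      using homR_sigp[OF g, of "par d"] rmul_sc_right[OF hR gR] by simp
    finally show ?thesis by (simp add: sc_sc sq_sign sc_1)
  qed
  have xg: "x g = rmul h g" if g: "g \<in> Rn n" for g
  proof -
    have "x g = (\<Sum>k\<in>supp g. x (sc (g k) (mono k)))" using An_expand[OF xA g] .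
    also have "\<dots> = (\<Sum>k\<in>supp g. rmul h (sc (g k) (mono k)))"
      by (rule sum.cong[OF refl]) (rule xg_hom[OF expand_hom[OF g]])
    also have "\<dots> = rmul h (\<Sum>k\<in>supp g. sc (g k) (mono k))"
      by (rule rmul_sum_right[OF hR, symmetric]) (meson Rn_sc Rn_mono Rn_valid g)
    also have "\<dots> = rmul h g" using expand[OF g] by simp
    finally show ?thesis .
  qed
  have xeq: "x = mulop n h"
  proof (rule ext)
    fix g show "x g = mulop n h g"
      by (cases "g \<in> Rn n") (simp_all add: xg mulop_in mulop_out An_out[OF xA])
  qed
  have inv: "sact i h = h" if i: "1 \<le> i" "i < n" for i
  proof -
    have "(x \<circ> demop n i) rone = opscale ((-1) ^ (par d * par (-2, 0))) (demop n i \<circ> x) rone"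
      using scm[OF An.dem[OF i] hom_op_demop[OF i]] by simp
    then have "x (dem n i rone) = dem n i h"
      by (simp add: par_m20 opscale_def demop_in Rn_rone h_def[symmetric] hR)
    then have "dem n i h = 0" using dem_rone[OF i] An_zero[OF xA] by simp
    then have "h - sact i h = 0" using dem_mul[OF i hR] by (simp add: rmul_zero_right)
    then show ?thesis by simp
  qed
  have "h \<in> Rinv n" using hR inv by (simp add: Rinv_def)
  then show ?thesis using xeq by blast
qed

definition proj :: "int \<times> int \<Rightarrow> elt \<Rightarrow> elt" where
  "proj D c = (\<lambda>m. if mdeg m = D then c m else 0)"

lemma supp_proj: "supp (proj D c) \<subseteq> supp c" by (auto simp: supp_def proj_def)

lemma proj_hom: "c \<in> Rn n \<Longrightarrow> homR n D (proj D c)"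
  unfolding homR_def Rn_def using supp_proj[of D c] by (auto intro: finite_subset simp: supp_def proj_def split: if_splits)

lemma proj_Rn: "c \<in> Rn n \<Longrightarrow> proj D c \<in> Rn n" using proj_hom homR_Rn by blast

lemma decomp: "c \<in> Rn n \<Longrightarrow> c = (\<Sum>D\<in>mdeg ` supp c. proj D c)"
proof (rule ext)
  fix m assume c: "c \<in> Rn n"
  have f: "finite (mdeg ` supp c)" using c by (simp add: Rn_fin)
  have "(\<Sum>D\<in>mdeg ` supp c. proj D c) m = (\<Sum>D\<in>mdeg ` supp c. if mdeg m = D then c m else 0)"
    by (simp add: sum_fun_apply proj_def)
  also have "\<dots> = (if mdeg m \<in> mdeg ` supp c then c m else 0)" using f by simp
  also have "\<dots> = c m" by (auto simp: supp_def)
  finally show "c m = (\<Sum>D\<in>mdeg ` supp c. proj D c) m" by simp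
qed

lemma proj_of_hom: "homR n E y \<Longrightarrow> proj D y = (if E = D then y else 0)"
proof (rule ext)
  fix m assume y: "homR n E y"
  show "proj D y m = (if E = D then y else 0) m"
    using homR_supp[OF y, of m] by (cases "m \<in> supp y") (auto simp: proj_def supp_def)
qed

lemma linop_proj: "linop n (proj D)"
  by (simp add: linop_def proj_def sc_def fun_eq_iff)

lemma proj_sact:
  assumes i: "1 \<le> i" "i < n" and c: "c \<in> Rn n"
  shows "sact i (proj D c) = proj D (sact i c)"
proof (rule linop_eq[where n=n, of "\<lambda>c. sact i (proj D c)" "\<lambda>c. proj D (sact i c)"])
  show "linop n (\<lambda>c. sact i (proj D c))" by (rule linop_comp[OF linop_sact linop_proj proj_Rn])
  show "linop n (\<lambda>c. proj D (sact i c))" by (rule linop_comp[OF linop_proj linop_sact Rn_sact[OF i]])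
  fix k assume v: "valid_mon n k"
  show "sact i (proj D (mono k)) = proj D (sact i (mono k))"
    using proj_of_hom[OF homR_mono[OF v], of D] proj_of_hom[OF homR_simg[OF i v], of D]
    by (simp add: sact_mono linop_zero[OF linop_sact])
qed (rule c)

lemma Rinv_zero: "0 \<in> Rinv n" by (simp add: Rinv_def Rn_zero linop_zero[OF linop_sact])

lemma Rinv_add: "f \<in> Rinv n \<Longrightarrow> g \<in> Rinv n \<Longrightarrow> f + g \<in> Rinv n"
proof -
  assume f: "f \<in> Rinv n" and g: "g \<in> Rinv n"
  have fR: "f \<in> Rn n" and gR: "g \<in> Rn n" using f g by (simp_all add: Rinv_def)
  show ?thesis using f g Rn_add[OF fR gR] linop_add[OF linop_sact fR gR] by (auto simp: Rinv_def)
qed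

lemma proj_Rinv: "f \<in> Rinv n \<Longrightarrow> proj D f \<in> Rinv n"
proof -
  assume f: "f \<in> Rinv n"
  have fR: "f \<in> Rn n" using f by (simp add: Rinv_def)
  show ?thesis using f proj_Rn[OF fR] proj_sact[OF _ _ fR] by (auto simp: Rinv_def)
qed

lemma mulop_zero: "mulop n 0 = zeroop"
  by (simp add: fun_eq_iff mulop_def restr_def zeroop_def rmul_zero_left rzero_eq)

lemma mulop_add: "f \<in> Rn n \<Longrightarrow> f' \<in> Rn n \<Longrightarrow> mulop n (f + f') = opadd (mulop n f) (mulop n f')"
proof (rule ext)
  fix g assume f: "f \<in> Rn n" "f' \<in> Rn n"
  show "mulop n (f + f') g = opadd (mulop n f) (mulop n f') g"
    by (cases "g \<in> Rn n") (simp_all add: mulop_in mulop_out opadd_def radd_eq rmul_add_left[OF f] Rn_add[OF f])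
qed

lemma Zs_sum: "finite A \<Longrightarrow> (\<And>D. D \<in> A \<Longrightarrow> G D \<in> Rinv n \<and> homR n D (G D)) \<Longrightarrow> mulop n (sum G A) \<in> Zs n"
proof (induction A rule: finite_induct)
  case empty then show ?case by (simp add: mulop_zero Zs.zero zero_eta)
next
  case (insert D A)
  have GD: "G D \<in> Rinv n" "homR n D (G D)" using insert.prems by auto
  have SR: "sum G A \<in> Rn n" using insert.prems by (intro Rn_sum) (auto simp: Rinv_def)
  have "mulop n (sum G (insert D A)) = opadd (mulop n (G D)) (mulop n (sum G A))"
    using insert.hyps mulop_add[OF _ SR, of "G D"] GD by (simp add: Rinv_def)
  also have "\<dots> \<in> Zs n" using Zs.add[OF inv_HZ[OF GD] insert.IH] insert.prems by auto
  finally show ?case .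
qed

lemma Rinv_Zs: "f \<in> Rinv n \<Longrightarrow> mulop n f \<in> Zs n"
proof -
  assume f: "f \<in> Rinv n"
  have fR: "f \<in> Rn n" using f by (simp add: Rinv_def)
  have "mulop n (\<Sum>D\<in>mdeg ` supp f. proj D f) \<in> Zs n"
    using fR f by (intro Zs_sum) (auto simp: Rn_fin proj_Rinv proj_hom)
  then show ?thesis using decomp[OF fR] by simp
qed

lemma Zs_char: "x \<in> Zs n \<Longrightarrow> \<exists>h\<in>Rinv n. x = mulop n h"
proof (induction rule: Zs.induct)
  case zero then show ?case using Rinv_zero mulop_zero by metis
next
  case (add x y)
  obtain h1 where h1: "h1 \<in> Rinv n" "x = mulop n h1" using HZ_char[OF add.hyps(1)] by blast
  obtain h2 where h2: "h2 \<in> Rinv n" "y = mulop n h2" using add.IH by blast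
  have "opadd x y = mulop n (h1 + h2)" using h1 h2 mulop_add[of h1 n h2] by (simp add: Rinv_def)
  then show ?case using Rinv_add[OF h1(1) h2(1)] by blast
qed

theorem proposition2p7:
  fixes n :: nat
  shows "\<exists>\<phi>. bij_betw \<phi> (Rinv n) (Zs n)
    \<and> (\<forall>f\<in>Rinv n. \<forall>g\<in>Rinv n.
          \<phi> (radd f g) = opadd (\<phi> f) (\<phi> g) \<and> \<phi> (rmul f g) = \<phi> f \<circ> \<phi> g)
    \<and> \<phi> rone = idop n
    \<and> (\<forall>f\<in>Rinv n. \<forall>d. homR n d f \<longleftrightarrow> hom_op n d (\<phi> f))"
proof (intro exI[of _ "mulop n"] conjI ballI allI)
  have inj: "inj_on (mulop n) (Rinv n)"
  proof (rule inj_onI)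
    fix f g assume f: "f \<in> Rinv n" and g: "g \<in> Rinv n" and e: "mulop n f = mulop n g"
    have fR: "f \<in> Rn n" and gR: "g \<in> Rn n" using f g by (simp_all add: Rinv_def)
    have "f = rmul f rone" using rmul_one_right[OF fR] by simp
    also have "\<dots> = mulop n f rone" using mulop_in[OF Rn_rone, of n f] by simp
    also have "\<dots> = mulop n g rone" using e by simp
    also have "\<dots> = rmul g rone" using mulop_in[OF Rn_rone, of n g] by simp
    also have "\<dots> = g" using rmul_one_right[OF gR] by simp
    finally show "f = g" .
  qed
  have img: "mulop n ` Rinv n = Zs n"
    using Rinv_Zs Zs_char by blast
  show "bij_betw (mulop n) (Rinv n) (Zs n)" using inj img by (simp add: bij_betw_def)
next
  fix f g assume f: "f \<in> Rinv n" and g: "g \<in> Rinv n"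
  have fR: "f \<in> Rn n" and gR: "g \<in> Rn n" using f g by (simp_all add: Rinv_def)
  show "mulop n (radd f g) = opadd (mulop n f) (mulop n g)" using mulop_add[OF fR gR] by (simp add: radd_eq)
  show "mulop n (rmul f g) = mulop n f \<circ> mulop n g"
  proof (rule ext)
    fix x show "mulop n (rmul f g) x = (mulop n f \<circ> mulop n g) x"
      by (cases "x \<in> Rn n") (simp_all add: mulop_in mulop_out Rn_rmul gR rmul_assoc[OF fR gR] Rn_zero rmul_zero_right)
  qed
next
  show "mulop n rone = idop n"
    by (simp add: fun_eq_iff mulop_def idop_def restr_def rmul_one_left)
next
  fix f d assume f: "f \<in> Rinv n"
  have fR: "f \<in> Rn n" using f by (simp add: Rinv_def)
  show "homR n d f = hom_op n d (mulop n f)"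
  proof
    assume "homR n d f" then show "hom_op n d (mulop n f)" by (rule hom_op_mulop)
  next
    assume H: "hom_op n d (mulop n f)"
    have "homR n (fst d + fst (0::int, 0::int), snd d + snd (0::int, 0::int)) (mulop n f rone)"
      using H[unfolded hom_op_def, rule_format, OF homR_rone] .
    then have "homR n (fst d + 0, snd d + 0) (mulop n f rone)" by simp
    then show "homR n d f" using rmul_one_right[OF fR] by (simp add: mulop_in Rn_rone)
  qed
qed

end
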